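(* Fix a material point and let $T>0$. Let $t\mapsto\bm C(t)$, $t\in[0,T]$, be a smooth curve of symmetric positive-definite tensors, and for $\alpha=1,\dots,m$ let $t\mapsto\bm\Gamma^\alpha(t)$ be the solution on $[0,T]$ of $$\eta^\alpha\frac{d\bm\Gamma^\alpha}{dt}=\tilde{\bm S}^\alpha_{\mathrm{iso}}(\tilde{\bm C}(t))-\hat{\bm S}^\alpha_0-\mu^\alpha(\bm\Gamma^\alpha-\bm I)$$ with a given symmetric initial value, where $\tilde{\bm C}(t)=\det(\bm C(t))^{-1/3}\bm C(t)$. For $t_n\in[0,T)$ and $0<\Delta t_n\le T-t_n$ set $\bm C_n:=\bm C(t_n)$, $\bm C_{n+1}:=\bm C(t_n+\Delta t_n)$, $\bm\Gamma^\alpha_n:=\bm\Gamma^\alpha(t_n)$, $\bm\Gamma^\alpha_{n+1}:=\bm\Gamma^\alpha(t_n+\Delta t_n)$, $\bm\Gamma^\alpha_{n+\frac12}:=\frac12(\bm\Gamma^\alpha_n+\bm\Gamma^\alpha_{n+1})$, $\bm C_{n+\frac12}:=\frac12(\bm C_n+\bm C_{n+1})$, $\tilde{\bm C}_k:=\det(\bm C_k)^{-1/3}\bm C_k$, $\bm Z_n:=(\bm C_{n+1}-\bm C_n)/2$, $\bm S_{\mathrm{iso}\,n+\frac12}:=\bm S_{\mathrm{iso}}(\bm C_{n+\frac12},\bm\Gamma^1_{n+\frac12},\dots,\bm\Gamma^m_{n+\frac12})$, and $$\bm S_{\mathrm{iso\,enh2}}:=\frac{G_{\mathrm{iso}}(\tilde{\bm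 C}_{n+1},\bm\Gamma^1_{n+\frac12},\dots,\bm\Gamma^m_{n+\frac12})-G_{\mathrm{iso}}(\tilde{\bm C}_{n},\bm\Gamma^1_{n+\frac12},\dots,\bm\Gamma^m_{n+\frac12})-\bm S_{\mathrm{iso}\,n+\frac12}:\bm Z_n}{|\bm Z_n|^2}\bm Z_n$$ (and $\bm S_{\mathrm{iso\,enh2}}:=\bm 0$ if $\bm Z_n=\bm 0$). Then $\bm S_{\mathrm{iso\,enh2}}$ is asymptotically second order in $\Delta t_n$: there are constants $K>0$ and $\delta>0$, independent of $t_n$ and $\Delta t_n$, such that $|\bm S_{\mathrm{iso\,enh2}}|\le K\Delta t_n^2$ whenever $0<\Delta t_n\le\delta$.
   Context: $|\bm A|=(\bm A:\bm A)^{1/2}$; $\bm I$ the identity tensor. Material model: fix $m\ge1$; for each $\alpha$: $\mu^\alpha>0$, $\eta^\alpha>0$, constant symmetric tensor $\hat{\bm S}^\alpha_0$, smooth scalar function $G^\alpha$ on symmetric positive-definite tensors with $\tilde{\bm S}^\alpha_{\mathrm{iso}}(\tilde{\bm C}):=2\partial G^\alpha/\partial\tilde{\bm C}$; $G^\infty_{\mathrm{iso}}$ smooth. $\Upsilon^\alpha(\tilde{\bm C},\bm\Gamma):=\frac{1}{4\mu^\alpha}|\tilde{\bm S}^\alpha_{\mathrm{iso}}(\tilde{\bm C})-\hat{\bm S}^\alpha_0-\mu^\alpha(\bm\Gamma-\bm I)|^2$; $G_{\mathrm{iso}}(\tilde{\bm C},\bm\Gamma^1,\dots,\bm\Gamma^m):=G^\infty_{\mathrm{iso}}(\tilde{\bm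 C})+\sum_\alpha\Upsilon^\alpha(\tilde{\bm C},\bm\Gamma^\alpha)$. For symmetric positive-definite $\bm C$, with $\tilde{\bm C}=\det(\bm C)^{-1/3}\bm C$ and $\tilde{\bm S}:=2\partial G_{\mathrm{iso}}/\partial\tilde{\bm C}$ (at fixed $\bm\Gamma^\alpha$) evaluated at $(\tilde{\bm C},\bm\Gamma^1,\dots,\bm\Gamma^m)$, the isochoric second Piola–Kirchhoff stress is $\bm S_{\mathrm{iso}}(\bm C,\bm\Gamma^1,\dots,\bm\Gamma^m):=\det(\bm C)^{-1/3}\big(\tilde{\bm S}-\tfrac13(\bm C:\tilde{\bm S})\bm C^{-1}\big)$. *)

theory Defs
  imports "HOL-Analysis.Analysis"
begin

type_synonym tensor = "real^3^3"

definition ddot :: "tensor \<Rightarrow> tensor \<Rightarrow> real" where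
  "ddot A B = (\<Sum>i\<in>UNIV. \<Sum>j\<in>UNIV. A$i$j * B$i$j)"

definition tnorm :: "tensor \<Rightarrow> real" where
  "tnorm A = sqrt (ddot A A)"

definition spd :: "tensor \<Rightarrow> bool" where
  "spd C \<longleftrightarrow> transpose C = C \<and> (\<forall>x::real^3. x \<noteq> 0 \<longrightarrow> x \<bullet> (C *v x) > 0)"

text \<open>D l is the iterated partial derivative along the directions of the list l.\<close>
definition smooth_on :: "'a::euclidean_space set \<Rightarrow> ('a \<Rightarrow> 'b::real_normed_vector) \<Rightarrow> bool" where
  "smooth_on U f \<longleftrightarrow> (\<exists>D :: 'a list \<Rightarrow> 'a \<Rightarrow> 'b. D [] = f \<and>
     (\<forall>l. set l \<subseteq> Basis \<longrightarrow> continuous_on U (D l) \<and>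
        (\<forall>x\<in>U. (D l has_derivative (\<lambda>h. \<Sum>i\<in>Basis. (h \<bullet> i) *\<^sub>R D (i # l) x)) (at x within U))))"

definition Eij :: "3 \<Rightarrow> 3 \<Rightarrow> tensor" where
  "Eij i j = axis i (axis j 1)"

text \<open>Derivative dG/dC of a scalar function with respect to a symmetric tensor argument:
  the symmetric tensor D with DG(C)[H] = D:H for all symmetric H.\<close>
definition sgrad :: "(tensor \<Rightarrow> real) \<Rightarrow> tensor \<Rightarrow> tensor" where
  "sgrad G C = (\<chi> i j. (frechet_derivative G (at C) (Eij i j) + frechet_derivative G (at C) (Eij j i)) / 2)"

definition Ctil :: "tensor \<Rightarrow> tensor" where
  "Ctil C = (det C powr (-1/3)) *\<^sub>R C"

definition Siso_alpha :: "(tensor \<Rightarrow> real) \<Rightarrow> tensor \<Rightarrow> tensor" where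
  "Siso_alpha G Ct = 2 *\<^sub>R sgrad G Ct"

definition Upsilon :: "real \<Rightarrow> tensor \<Rightarrow> (tensor \<Rightarrow> real) \<Rightarrow> tensor \<Rightarrow> tensor \<Rightarrow> real" where
  "Upsilon mu S0 G Ct Gam = 1 / (4 * mu) * (tnorm (Siso_alpha G Ct - S0 - mu *\<^sub>R (Gam - mat 1)))\<^sup>2"

definition Giso :: "nat \<Rightarrow> (nat \<Rightarrow> real) \<Rightarrow> (nat \<Rightarrow> tensor) \<Rightarrow> (nat \<Rightarrow> tensor \<Rightarrow> real)
    \<Rightarrow> (tensor \<Rightarrow> real) \<Rightarrow> tensor \<Rightarrow> (nat \<Rightarrow> tensor) \<Rightarrow> real" where
  "Giso m mu S0 G Ginf Ct Gam = Ginf Ct + (\<Sum>\<alpha>=1..m. Upsilon (mu \<alpha>) (S0 \<alpha>) (G \<alpha>) Ct (Gam \<alpha>))"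

definition Siso :: "nat \<Rightarrow> (nat \<Rightarrow> real) \<Rightarrow> (nat \<Rightarrow> tensor) \<Rightarrow> (nat \<Rightarrow> tensor \<Rightarrow> real)
    \<Rightarrow> (tensor \<Rightarrow> real) \<Rightarrow> tensor \<Rightarrow> (nat \<Rightarrow> tensor) \<Rightarrow> tensor" where
  "Siso m mu S0 G Ginf C Gam =
     (let St = 2 *\<^sub>R sgrad (\<lambda>X. Giso m mu S0 G Ginf X Gam) (Ctil C)
      in (det C powr (-1/3)) *\<^sub>R (St - ((1/3) * ddot C St) *\<^sub>R matrix_inv C))"

definition Senh2 :: "nat \<Rightarrow> (nat \<Rightarrow> real) \<Rightarrow> (nat \<Rightarrow> tensor) \<Rightarrow> (nat \<Rightarrow> tensor \<Rightarrow> real)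
    \<Rightarrow> (tensor \<Rightarrow> real) \<Rightarrow> (real \<Rightarrow> tensor) \<Rightarrow> (nat \<Rightarrow> real \<Rightarrow> tensor) \<Rightarrow> real \<Rightarrow> real \<Rightarrow> tensor" where
  "Senh2 m mu S0 G Ginf C Gam tn dt =
     (let Cn = C tn; Cn1 = C (tn + dt);
          Gh = (\<lambda>\<alpha>. (1/2) *\<^sub>R (Gam \<alpha> tn + Gam \<alpha> (tn + dt)));
          Ch = (1/2) *\<^sub>R (Cn + Cn1);
          Z = (1/2) *\<^sub>R (Cn1 - Cn);
          Sh = Siso m mu S0 G Ginf Ch Gh
      in if Z = 0 then 0
         else ((Giso m mu S0 G Ginf (Ctil Cn1) Gh - Giso m mu S0 G Ginf (Ctil Cn) Gh - ddot Sh Z)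
               / (tnorm Z)\<^sup>2) *\<^sub>R Z)"

end

theory Submission
  imports Defs
begin

fun Ck :: "nat \<Rightarrow> 'a::euclidean_space set \<Rightarrow> ('a \<Rightarrow> real) \<Rightarrow> bool" where
  "Ck 0 U f = continuous_on U f"
| "Ck (Suc k) U f = (continuous_on U f \<and> (\<exists>g. (\<forall>i\<in>Basis. Ck k U (g i)) \<and>
      (\<forall>x\<in>U. (f has_derivative (\<lambda>h. \<Sum>i\<in>Basis. (h \<bullet> i) * g i x)) (at x))))"

lemma Ck_cont: "Ck k U f \<Longrightarrow> continuous_on U f"
  by (cases k) auto

lemma Ck_Suc_le: "Ck (Suc k) U f \<Longrightarrow> Ck k U f"
proof (induction k arbitrary: f)
  case 0 then show ?case by simp
next
  case (Suc k)
  from Suc.prems obtain g where g: "\<forall>i\<in>Basis. Ck (Suc k) U (g i)"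
    "\<forall>x\<in>U. (f has_derivative (\<lambda>h. \<Sum>i\<in>Basis. (h \<bullet> i) * g i x)) (at x)"
    and c: "continuous_on U f" by auto
  have "\<forall>i\<in>Basis. Ck k U (g i)" using g(1) Suc.IH by blast
  then show ?case using g(2) c by (simp only: Ck.simps) blast
qed

lemma Ck_le: "m \<le> k \<Longrightarrow> Ck k U f \<Longrightarrow> Ck m U f"
proof (induction k)
  case 0 thus ?case by simp
next
  case (Suc k) thus ?case by (metis Ck_Suc_le le_SucE)
qed

lemma Ck_subset: "T \<subseteq> U \<Longrightarrow> Ck k U f \<Longrightarrow> Ck k T f"
proof (induction k arbitrary: f)
  case 0 then show ?case by (auto intro: continuous_on_subset)
next
  case (Suc k)
  then show ?case by (auto intro: continuous_on_subset) (metis subsetD)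
qed

lemma Ck_const: "Ck k U (\<lambda>x. c)"
proof (induction k arbitrary: c)
  case 0 then show ?case by simp
next
  case (Suc k)
  show ?case
    by (auto intro!: exI[where x="\<lambda>i x. 0"] Suc.IH)
qed

lemma Ck_add: "Ck k U f \<Longrightarrow> Ck k U g \<Longrightarrow> Ck k U (\<lambda>x. f x + g x)"
proof (induction k arbitrary: f g)
  case 0 then show ?case by (auto intro: continuous_intros)
next
  case (Suc k)
  from Suc.prems obtain gf gg where
    gf: "\<forall>i\<in>Basis. Ck k U (gf i)" "\<forall>x\<in>U. (f has_derivative (\<lambda>h. \<Sum>i\<in>Basis. (h \<bullet> i) * gf i x)) (at x)"
    and gg: "\<forall>i\<in>Basis. Ck k U (gg i)" "\<forall>x\<in>U. (g has_derivative (\<lambda>h. \<Sum>i\<in>Basis. (h \<bullet> i) * gg i x)) (at x)"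
    and c: "continuous_on U f" "continuous_on U g" by auto
  show ?case
  proof (simp, intro conjI exI[where x="\<lambda>i x. gf i x + gg i x"] ballI)
    show "continuous_on U (\<lambda>x. f x + g x)" using c by (auto intro: continuous_intros)
    fix i :: 'a assume "i \<in> Basis" then show "Ck k U (\<lambda>x. gf i x + gg i x)"
      using gf gg Suc.IH by auto
  next
    fix x assume "x \<in> U"
    then have "((\<lambda>x. f x + g x) has_derivative (\<lambda>h. (\<Sum>i\<in>Basis. (h \<bullet> i) * gf i x) + (\<Sum>i\<in>Basis. (h \<bullet> i) * gg i x))) (at x)"
      using gf gg by (auto intro: has_derivative_add)
    then show "((\<lambda>x. f x + g x) has_derivative (\<lambda>h. \<Sum>i\<in>Basis. h \<bullet> i * (gf i x + gg i x))) (at x)"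
      by (simp add: sum.distrib distrib_left)
  qed
qed

lemma Ck_mult: "Ck k U f \<Longrightarrow> Ck k U g \<Longrightarrow> Ck k U (\<lambda>x. f x * g x)"
proof (induction k arbitrary: f g)
  case 0 then show ?case by (auto intro: continuous_intros)
next
  case (Suc k)
  from Suc.prems obtain gf gg where
    gf: "\<forall>i\<in>Basis. Ck k U (gf i)" "\<forall>x\<in>U. (f has_derivative (\<lambda>h. \<Sum>i\<in>Basis. (h \<bullet> i) * gf i x)) (at x)"
    and gg: "\<forall>i\<in>Basis. Ck k U (gg i)" "\<forall>x\<in>U. (g has_derivative (\<lambda>h. \<Sum>i\<in>Basis. (h \<bullet> i) * gg i x)) (at x)"
    and c: "continuous_on U f" "continuous_on U g" by auto
  have fk: "Ck k U f" "Ck k U g" using Suc.prems Ck_Suc_le by blast+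
  show ?case
  proof (simp, intro conjI exI[where x="\<lambda>i x. f x * gg i x + gf i x * g x"] ballI)
    show "continuous_on U (\<lambda>x. f x * g x)" using c by (auto intro: continuous_intros)
    fix i :: 'a assume "i \<in> Basis" then show "Ck k U (\<lambda>x. f x * gg i x + gf i x * g x)"
      using gf gg Suc.IH fk by (auto intro!: Ck_add)
  next
    fix x assume "x \<in> U"
    then have "((\<lambda>x. f x * g x) has_derivative (\<lambda>h. f x * (\<Sum>i\<in>Basis. (h \<bullet> i) * gg i x) + (\<Sum>i\<in>Basis. (h \<bullet> i) * gf i x) * g x)) (at x)"
      using gf gg by (auto intro: has_derivative_mult)
    then show "((\<lambda>x. f x * g x) has_derivative (\<lambda>h. \<Sum>i\<in>Basis. h \<bullet> i * (f x * gg i x + gf i x * g x))) (at x)"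
      by (simp add: sum.distrib distrib_left sum_distrib_left sum_distrib_right algebra_simps)
  qed
qed

lemma Ck_cmult: "Ck k U f \<Longrightarrow> Ck k U (\<lambda>x. c * f x)"
  using Ck_mult[OF Ck_const] by blast

lemma Ck_minus: "Ck k U f \<Longrightarrow> Ck k U g \<Longrightarrow> Ck k U (\<lambda>x. f x - g x)"
  using Ck_add[of k U f "\<lambda>x. (-1) * g x"] Ck_cmult[of k U g "-1"] by simp

lemma Ck_sum: "finite A \<Longrightarrow> (\<And>a. a \<in> A \<Longrightarrow> Ck k U (f a)) \<Longrightarrow> Ck k U (\<lambda>x. \<Sum>a\<in>A. f a x)"
  by (induction A rule: finite_induct) (auto intro: Ck_add Ck_const)

lemma Ck_inner: "Ck k U (\<lambda>x. x \<bullet> v)"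
proof (cases k)
  case 0 then show ?thesis by (auto intro: continuous_intros)
next
  case (Suc k')
  show ?thesis unfolding Suc
  proof (simp, intro conjI exI[where x="\<lambda>i x. i \<bullet> v"] ballI)
    show "continuous_on U (\<lambda>x. x \<bullet> v)" by (auto intro: continuous_intros)
    fix i :: 'a show "Ck k' U (\<lambda>x. i \<bullet> v)" by (rule Ck_const)
  next
    fix x
    have "((\<lambda>x. x \<bullet> v) has_derivative (\<lambda>h. h \<bullet> v)) (at x)"
      by (auto intro!: derivative_eq_intros)
    moreover have "(\<lambda>h. h \<bullet> v) = (\<lambda>h. \<Sum>i\<in>Basis. h \<bullet> i * (i \<bullet> v))"
      by (rule ext) (subst euclidean_inner, simp add: inner_commute)
    ultimately show "((\<lambda>x. x \<bullet> v) has_derivative (\<lambda>h. \<Sum>i\<in>Basis. h \<bullet> i * (i \<bullet> v))) (at x)" by simp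
  qed
qed

lemma Ck_cong_open: "open U \<Longrightarrow> (\<And>x. x \<in> U \<Longrightarrow> f x = g x) \<Longrightarrow> Ck k U g \<Longrightarrow> Ck k U f"
proof (cases k)
  case 0 then show "open U \<Longrightarrow> (\<And>x. x \<in> U \<Longrightarrow> f x = g x) \<Longrightarrow> Ck k U g \<Longrightarrow> Ck k U f"
    by (auto intro: continuous_on_cong[THEN iffD1, rotated])
next
  case (Suc k')
  assume U: "open U" and eq: "\<And>x. x \<in> U \<Longrightarrow> f x = g x" and C: "Ck k U g"
  from C obtain gg where gg: "\<forall>i\<in>Basis. Ck k' U (gg i)" "\<forall>x\<in>U. (g has_derivative (\<lambda>h. \<Sum>i\<in>Basis. (h \<bullet> i) * gg i x)) (at x)"
    and c: "continuous_on U g" unfolding Suc by auto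
  show ?thesis unfolding Suc
  proof (simp, intro conjI exI[where x=gg] ballI)
    show "continuous_on U f" using c eq by (auto intro: continuous_on_cong[THEN iffD1, rotated])
    fix i :: 'a assume "i \<in> Basis" then show "Ck k' U (gg i)" using gg by auto
  next
    fix x assume x: "x \<in> U"
    show "(f has_derivative (\<lambda>h. \<Sum>i\<in>Basis. h \<bullet> i * gg i x)) (at x)"
      by (rule has_derivative_transform_within_open[OF gg(2)[rule_format, OF x] U x]) (simp add: eq)
  qed
qed

lemma inner_sum_Basis_comp:
  fixes c :: "'a::euclidean_space \<Rightarrow> real"
  assumes "j \<in> Basis"
  shows "(\<Sum>b\<in>Basis. c b *\<^sub>R b) \<bullet> j = c j"
proof -
  have "(\<Sum>b\<in>Basis. c b *\<^sub>R b) \<bullet> j = (\<Sum>b\<in>Basis. c b * (b \<bullet> j))"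
    by (simp add: inner_sum_left)
  also have "\<dots> = (\<Sum>b\<in>Basis. if b = j then c j else 0)"
    by (rule sum.cong) (auto simp: inner_Basis assms)
  also have "\<dots> = c j" using assms by simp
  finally show ?thesis .
qed

lemma Ck_compose:
  fixes g :: "'b::euclidean_space \<Rightarrow> real" and f :: "'a::euclidean_space \<Rightarrow> 'b"
  shows "Ck k V g \<Longrightarrow> (\<forall>b\<in>Basis. Ck k U (\<lambda>x. f x \<bullet> b)) \<Longrightarrow> f ` U \<subseteq> V \<Longrightarrow> Ck k U (\<lambda>x. g (f x))"
proof (induction k arbitrary: g)
  case 0
  have "continuous_on U f" by (subst continuous_on_componentwise) (use 0 in simp)
  then show ?case using 0 by (simp add: continuous_on_compose2)
next
  case (Suc k)
  have fc: "continuous_on U f" by (subst continuous_on_componentwise) (use Suc.prems(2) Ck_cont in blast)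
  from Suc.prems(1) obtain gg where
    gg: "\<forall>i\<in>Basis. Ck k V (gg i)" "\<forall>y\<in>V. (g has_derivative (\<lambda>h. \<Sum>i\<in>Basis. (h \<bullet> i) * gg i y)) (at y)"
    and gc: "continuous_on V g" by auto
  have "\<forall>b\<in>Basis. \<exists>gf. (\<forall>i\<in>Basis. Ck k U (gf i)) \<and>
      (\<forall>x\<in>U. ((\<lambda>x. f x \<bullet> b) has_derivative (\<lambda>h. \<Sum>i\<in>Basis. (h \<bullet> i) * gf i x)) (at x))"
    using Suc.prems(2) by auto
  from bchoice[OF this] obtain gf where gf: "\<forall>b\<in>Basis. (\<forall>i\<in>Basis. Ck k U (gf b i)) \<and>
      (\<forall>x\<in>U. ((\<lambda>x. f x \<bullet> b) has_derivative (\<lambda>h. \<Sum>i\<in>Basis. (h \<bullet> i) * gf b i x)) (at x))"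
    by blast
  have fk: "\<forall>b\<in>Basis. Ck k U (\<lambda>x. f x \<bullet> b)" using Suc.prems(2) Ck_Suc_le by blast
  show ?case
  proof (simp only: Ck.simps, intro conjI exI[where x="\<lambda>i x. \<Sum>j\<in>Basis. gf j i x * gg j (f x)"] ballI)
    show "continuous_on U (\<lambda>x. g (f x))" by (rule continuous_on_compose2[OF gc fc Suc.prems(3)])
    fix i :: 'a assume "i \<in> Basis"
    show "Ck k U (\<lambda>x. \<Sum>j\<in>Basis. gf j i x * gg j (f x))"
    proof -
      have "\<forall>j\<in>Basis. Ck k U (\<lambda>x. gg j (f x))" using Suc.IH[OF _ fk Suc.prems(3)] gg(1) by blast
      then show ?thesis using gf \<open>i \<in> Basis\<close> by (intro Ck_sum Ck_mult) auto
    qed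
  next
    fix x assume x: "x \<in> U"
    have fr: "f = (\<lambda>x. \<Sum>b\<in>Basis. (f x \<bullet> b) *\<^sub>R b)" by (simp add: euclidean_representation)
    have "(f has_derivative (\<lambda>h. \<Sum>b\<in>Basis. (\<Sum>i\<in>Basis. (h \<bullet> i) * gf b i x) *\<^sub>R b)) (at x)"
      by (subst fr, rule has_derivative_sum, rule has_derivative_scaleR_left) (use gf x in auto)
    from has_derivative_compose[OF this gg(2)[rule_format, of "f x"]] x Suc.prems(3)
    have "((\<lambda>x. g (f x)) has_derivative (\<lambda>h. \<Sum>j\<in>Basis. ((\<Sum>b\<in>Basis. (\<Sum>i\<in>Basis. (h \<bullet> i) * gf b i x) *\<^sub>R b) \<bullet> j) * gg j (f x))) (at x)"
      by (auto simp: o_def)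
    moreover have "(\<lambda>h. \<Sum>j\<in>Basis. ((\<Sum>b\<in>Basis. (\<Sum>i\<in>Basis. (h \<bullet> i) * gf b i x) *\<^sub>R b) \<bullet> j) * gg j (f x))
       = (\<lambda>h. \<Sum>i\<in>Basis. h \<bullet> i * (\<Sum>j\<in>Basis. gf j i x * gg j (f x)))"
    proof
      fix h
      have "(\<Sum>j\<in>Basis. ((\<Sum>b\<in>Basis. (\<Sum>i\<in>Basis. (h \<bullet> i) * gf b i x) *\<^sub>R b) \<bullet> j) * gg j (f x))
          = (\<Sum>j\<in>Basis. (\<Sum>i\<in>Basis. (h \<bullet> i) * gf j i x) * gg j (f x))"
        by (rule sum.cong) (simp_all add: inner_sum_Basis_comp)
      also have "\<dots> = (\<Sum>j\<in>Basis. \<Sum>i\<in>Basis. h \<bullet> i * gf j i x * gg j (f x))"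
        by (simp add: sum_distrib_right)
      also have "\<dots> = (\<Sum>i\<in>Basis. \<Sum>j\<in>Basis. h \<bullet> i * gf j i x * gg j (f x))"
        by (rule sum.swap)
      also have "\<dots> = (\<Sum>i\<in>Basis. h \<bullet> i * (\<Sum>j\<in>Basis. gf j i x * gg j (f x)))"
        by (simp add: sum_distrib_left mult.assoc)
      finally show "(\<Sum>j\<in>Basis. ((\<Sum>b\<in>Basis. (\<Sum>i\<in>Basis. (h \<bullet> i) * gf b i x) *\<^sub>R b) \<bullet> j) * gg j (f x))
          = (\<Sum>i\<in>Basis. h \<bullet> i * (\<Sum>j\<in>Basis. gf j i x * gg j (f x)))" .
    qed
    ultimately show "((\<lambda>x. g (f x)) has_derivative (\<lambda>h. \<Sum>i\<in>Basis. h \<bullet> i * (\<Sum>j\<in>Basis. gf j i x * gg j (f x)))) (at x)"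
      by simp
  qed
qed

lemma Ck_powr: "Ck k {0<..} (\<lambda>y::real. y powr a)"
proof (induction k arbitrary: a)
  case 0 then show ?case by (auto intro!: continuous_intros)
next
  case (Suc k)
  show ?case
  proof (simp only: Ck.simps, intro conjI exI[where x="\<lambda>i y. a * y powr (a - 1)"] ballI)
    show "continuous_on {0<..} (\<lambda>y::real. y powr a)" by (auto intro!: continuous_intros)
    fix i :: real show "Ck k {0<..} (\<lambda>y. a * y powr (a - 1))" by (rule Ck_cmult[OF Suc.IH])
  next
    fix x :: real assume "x \<in> {0<..}"
    then have "((\<lambda>y. y powr a) has_real_derivative a * x powr (a - 1)) (at x)"
      by (auto intro!: derivative_eq_intros)
    moreover have "(\<lambda>h. \<Sum>i\<in>Basis. h \<bullet> i * (a * x powr (a - 1))) = (*) (a * x powr (a - 1))"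
      by (auto simp: mult.commute)
    ultimately show "((\<lambda>y. y powr a) has_derivative (\<lambda>h. \<Sum>i\<in>Basis. h \<bullet> i * (a * x powr (a - 1)))) (at x)"
      by (simp add: has_field_derivative_def)
  qed
qed

lemma smooth_Ck_aux:
  fixes D :: "'a::euclidean_space list \<Rightarrow> 'a \<Rightarrow> real"
  assumes U: "open U"
    and D: "\<forall>l. set l \<subseteq> Basis \<longrightarrow> continuous_on U (D l) \<and>
        (\<forall>x\<in>U. (D l has_derivative (\<lambda>h. \<Sum>i\<in>Basis. (h \<bullet> i) *\<^sub>R D (i # l) x)) (at x within U))"
  shows "set l \<subseteq> Basis \<Longrightarrow> Ck k U (D l)"
proof (induction k arbitrary: l)
  case 0 then show ?case using spec[OF D, of l] by simp
next
  case (Suc k)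
  have Dl: "continuous_on U (D l) \<and>
        (\<forall>x\<in>U. (D l has_derivative (\<lambda>h. \<Sum>i\<in>Basis. (h \<bullet> i) *\<^sub>R D (i # l) x)) (at x within U))"
    using spec[OF D, of l] Suc.prems by (rule mp)
  show ?case
  proof (simp only: Ck.simps, intro conjI exI[where x="\<lambda>i. D (i # l)"] ballI)
    show "continuous_on U (D l)" using Dl by (rule conjunct1)
    fix i :: 'a assume "i \<in> Basis" then show "Ck k U (D (i # l))" using Suc.IH Suc.prems by simp
  next
    fix x assume x: "x \<in> U"
    have Dx: "(D l has_derivative (\<lambda>h. \<Sum>i\<in>Basis. (h \<bullet> i) *\<^sub>R D (i # l) x)) (at x within U)"
      using conjunct2[OF Dl] x by (rule bspec)
    then show "(D l has_derivative (\<lambda>h. \<Sum>i\<in>Basis. h \<bullet> i * D (i # l) x)) (at x)"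
      unfolding at_within_open[OF x U] by simp
  qed
qed

lemma smooth_Ck:
  fixes f :: "'a::euclidean_space \<Rightarrow> real"
  assumes "open U" "smooth_on U f"
  shows "\<exists>D::'a list \<Rightarrow> 'a \<Rightarrow> real. D [] = f \<and> (\<forall>l k. set l \<subseteq> Basis \<longrightarrow> Ck k U (D l))"
proof -
  obtain D where D0: "D [] = f" and D: "\<forall>l. set l \<subseteq> Basis \<longrightarrow> continuous_on U (D l) \<and>
        (\<forall>x\<in>U. (D l has_derivative (\<lambda>h. \<Sum>i\<in>Basis. (h \<bullet> i) *\<^sub>R D (i # l) x)) (at x within U))"
    using assms(2) unfolding smooth_on_def by (elim exE conjE) (rule that)
  show ?thesis by (rule exI[where x=D]) (use D0 smooth_Ck_aux[OF assms(1) D] in auto)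
qed

lemma line_deriv:
  fixes F :: "'a::euclidean_space \<Rightarrow> real"
  assumes "(F has_derivative (\<lambda>h. \<Sum>i\<in>Basis. (h \<bullet> i) * G i (m + s *\<^sub>R z))) (at (m + s *\<^sub>R z))"
  shows "((\<lambda>s. F (m + s *\<^sub>R z)) has_real_derivative (\<Sum>i\<in>Basis. (z \<bullet> i) * G i (m + s *\<^sub>R z))) (at s)"
proof -
  have l: "((\<lambda>s. m + s *\<^sub>R z) has_derivative (\<lambda>t. t *\<^sub>R z)) (at s)"
    by (auto intro!: derivative_eq_intros)
  have "((\<lambda>s. F (m + s *\<^sub>R z)) has_derivative (\<lambda>t. \<Sum>i\<in>Basis. ((t *\<^sub>R z) \<bullet> i) * G i (m + s *\<^sub>R z))) (at s)"
    using has_derivative_compose[OF l assms] by (simp add: o_def)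
  moreover have "(\<lambda>t. \<Sum>i\<in>Basis. ((t *\<^sub>R z) \<bullet> i) * G i (m + s *\<^sub>R z)) = (*) (\<Sum>i\<in>Basis. (z \<bullet> i) * G i (m + s *\<^sub>R z))"
    by (rule ext) (simp add: sum_distrib_left mult_ac)
  ultimately show ?thesis
    by (simp add: has_field_derivative_def)
qed

lemma Ck_3: "Ck 3 S f = Ck (Suc 2) S f" by (simp only: numeral_3_eq_3 numeral_2_eq_2)
lemma Ck_2: "Ck 2 S f = Ck (Suc 1) S f" by (simp only: numeral_2_eq_2 One_nat_def)
lemma Ck_1: "Ck 1 S f = Ck (Suc 0) S f" by (simp only: One_nat_def)

lemma get_partials:
  assumes "\<forall>i\<in>Basis. Ck (Suc k) S (g i)"
  shows "\<exists>g2. \<forall>i\<in>Basis. (\<forall>j\<in>Basis. Ck k S (g2 i j)) \<and>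
      (\<forall>x\<in>S. (g i has_derivative (\<lambda>h. \<Sum>j\<in>Basis. (h \<bullet> j) * g2 i j x)) (at x))"
  by (rule bchoice) (use assms in auto)

lemma abs_sum3:
  fixes f :: "'a \<Rightarrow> 'b \<Rightarrow> 'c \<Rightarrow> real"
  shows "\<bar>\<Sum>i\<in>A. \<Sum>j\<in>B. \<Sum>k\<in>C. f i j k\<bar> \<le> (\<Sum>i\<in>A. \<Sum>j\<in>B. \<Sum>k\<in>C. \<bar>f i j k\<bar>)"
proof -
  have "\<bar>\<Sum>i\<in>A. \<Sum>j\<in>B. \<Sum>k\<in>C. f i j k\<bar> \<le> (\<Sum>i\<in>A. \<bar>\<Sum>j\<in>B. \<Sum>k\<in>C. f i j k\<bar>)"
    by (rule sum_abs)
  also have "\<dots> \<le> (\<Sum>i\<in>A. \<Sum>j\<in>B. \<bar>\<Sum>k\<in>C. f i j k\<bar>)"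
    by (intro sum_mono sum_abs)
  also have "\<dots> \<le> (\<Sum>i\<in>A. \<Sum>j\<in>B. \<Sum>k\<in>C. \<bar>f i j k\<bar>)"
    by (intro sum_mono sum_abs)
  finally show ?thesis .
qed

lemma taylor3:
  fixes H :: "'a::euclidean_space \<Rightarrow> real"
  assumes H: "Ck 3 S H" and K: "compact K" "convex K" "K \<subseteq> S"
  shows "\<exists>B. \<forall>m z. m - z \<in> K \<and> m + z \<in> K \<longrightarrow>
     \<bar>H (m + z) - H (m - z) - 2 * frechet_derivative H (at m) z\<bar> \<le> B * norm z ^ 3"
proof -
  from H[unfolded Ck_3] obtain g1 where g1: "\<forall>i\<in>Basis. Ck 2 S (g1 i)"
    "\<forall>x\<in>S. (H has_derivative (\<lambda>h. \<Sum>i\<in>Basis. (h \<bullet> i) * g1 i x)) (at x)"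
    by (auto simp only: Ck.simps(2))
  from get_partials[of 1 S g1] g1(1) obtain g2 where g2: "\<forall>i\<in>Basis. (\<forall>j\<in>Basis. Ck 1 S (g2 i j)) \<and>
      (\<forall>x\<in>S. (g1 i has_derivative (\<lambda>h. \<Sum>j\<in>Basis. (h \<bullet> j) * g2 i j x)) (at x))"
    unfolding Ck_2 by blast
  have "\<forall>i\<in>Basis. \<exists>g3. \<forall>j\<in>Basis. (\<forall>k\<in>Basis. Ck 0 S (g3 j k)) \<and>
      (\<forall>x\<in>S. (g2 i j has_derivative (\<lambda>h. \<Sum>k\<in>Basis. (h \<bullet> k) * g3 j k x)) (at x))"
  proof
    fix i :: 'a assume i: "i \<in> Basis"
    have "\<forall>j\<in>Basis. Ck (Suc 0) S (g2 i j)" using g2 i Ck_1 by blast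
    from get_partials[OF this] show "\<exists>g3. \<forall>j\<in>Basis. (\<forall>k\<in>Basis. Ck 0 S (g3 j k)) \<and>
      (\<forall>x\<in>S. (g2 i j has_derivative (\<lambda>h. \<Sum>k\<in>Basis. (h \<bullet> k) * g3 j k x)) (at x))" .
  qed
  from bchoice[OF this] obtain g3 where g3: "\<forall>i\<in>Basis. \<forall>j\<in>Basis. (\<forall>k\<in>Basis. Ck 0 S (g3 i j k)) \<and>
      (\<forall>x\<in>S. (g2 i j has_derivative (\<lambda>h. \<Sum>k\<in>Basis. (h \<bullet> k) * g3 i j k x)) (at x))"
    by blast
  define M where "M y = (\<Sum>i\<in>Basis. \<Sum>j\<in>Basis. \<Sum>k\<in>Basis. \<bar>g3 i j k y\<bar>)" for y
  have "continuous_on K M" unfolding M_def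
    using g3 K(3) by (auto intro!: continuous_intros intro: continuous_on_subset)
  then have "bounded (M ` K)" using K(1) by (simp add: compact_continuous_image compact_imp_bounded)
  then obtain B0 where B0: "\<forall>y\<in>K. \<bar>M y\<bar> \<le> B0" by (auto simp: bounded_real)
  show ?thesis
  proof (intro exI[where x="B0 / 3"] allI impI)
    fix m z assume mz: "m - z \<in> K \<and> m + z \<in> K"
    have seg: "m + s *\<^sub>R z \<in> K" if "-1 \<le> s" "s \<le> 1" for s
    proof -
      have c: "(1 - s)/2 + (1 + s)/2 = (1::real)" "(1 + s)/2 - (1 - s)/2 = s" by (simp_all add: field_simps)
      have "((1 - s)/2) *\<^sub>R (m - z) + ((1 + s)/2) *\<^sub>R (m + z)
          = ((1 - s)/2 + (1 + s)/2) *\<^sub>R m + ((1 + s)/2 - (1 - s)/2) *\<^sub>R z"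
        by (simp add: algebra_simps)
      then have "m + s *\<^sub>R z = ((1 - s)/2) *\<^sub>R (m - z) + ((1 + s)/2) *\<^sub>R (m + z)"
        unfolding c by simp
      moreover have "((1 - s)/2) *\<^sub>R (m - z) + ((1 + s)/2) *\<^sub>R (m + z) \<in> K"
        using K(2) mz that c(1) by (intro convexD) auto
      ultimately show ?thesis by simp
    qed
    define p0 where "p0 s = H (m + s *\<^sub>R z)" for s
    define p1 where "p1 s = (\<Sum>i\<in>Basis. (z \<bullet> i) * g1 i (m + s *\<^sub>R z))" for s
    define p2 where "p2 s = (\<Sum>i\<in>Basis. (z \<bullet> i) * (\<Sum>j\<in>Basis. (z \<bullet> j) * g2 i j (m + s *\<^sub>R z)))" for s
    define p3 where "p3 s = (\<Sum>i\<in>Basis. (z \<bullet> i) * (\<Sum>j\<in>Basis. (z \<bullet> j) *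
        (\<Sum>k\<in>Basis. (z \<bullet> k) * g3 i j k (m + s *\<^sub>R z))))" for s
    define diff where "diff n = [p0, p1, p2, p3] ! n" for n
    have d: "\<forall>n t. n < 3 \<and> -1 \<le> t \<and> t \<le> 1 \<longrightarrow> DERIV (diff n) t :> diff (Suc n) t"
    proof (intro allI impI)
      fix n :: nat and t :: real assume nt: "n < 3 \<and> -1 \<le> t \<and> t \<le> (1::real)"
      then have S: "m + t *\<^sub>R z \<in> S" using seg K(3) by auto
      consider "n = 0" | "n = 1" | "n = 2" using nt by linarith
      then show "DERIV (diff n) t :> diff (Suc n) t"
      proof cases
        case 1
        show ?thesis unfolding 1 diff_def p0_def p1_def
          by (simp, rule line_deriv) (use g1 S in auto)
      next
        case 2
        show ?thesis unfolding 2 diff_def p1_def p2_def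
          by (simp, intro DERIV_sum DERIV_cmult line_deriv) (use g2 S in auto)
      next
        case 3
        show ?thesis unfolding 3 diff_def p2_def p3_def
          by (simp add: numeral_3_eq_3, intro DERIV_sum DERIV_cmult line_deriv) (use g3 S in auto)
      qed
    qed
    have p0: "diff 0 = p0" by (simp add: diff_def)
    obtain t1 where t1: "0 < t1 \<and> t1 < 1" and T1:
      "p0 1 = (\<Sum>n<3. diff n 0 / fact n * (1 - 0) ^ n) + diff 3 t1 / fact 3 * (1 - 0) ^ 3"
      using Taylor[of 3 diff p0 "-1" 1 0 1, OF _ p0 d] by auto
    obtain t2 where t2: "-1 < t2 \<and> t2 < 0" and T2:
      "p0 (-1) = (\<Sum>n<3. diff n 0 / fact n * (-1 - 0) ^ n) + diff 3 t2 / fact 3 * (-1 - 0) ^ 3"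
      using Taylor[of 3 diff p0 "-1" 1 0 "-1", OF _ p0 d] by auto
    have bnd: "\<bar>p3 t\<bar> \<le> B0 * norm z ^ 3" if "-1 \<le> t" "t \<le> 1" for t
    proof -
      let ?y = "m + t *\<^sub>R z"
      have fl: "p3 t = (\<Sum>i\<in>Basis. \<Sum>j\<in>Basis. \<Sum>k\<in>Basis. (z \<bullet> i) * (z \<bullet> j) * (z \<bullet> k) * g3 i j k ?y)"
        by (simp add: p3_def sum_distrib_left mult.assoc)
      have "\<bar>p3 t\<bar> \<le> (\<Sum>i\<in>Basis. \<Sum>j\<in>Basis. \<Sum>k\<in>Basis. \<bar>(z \<bullet> i) * (z \<bullet> j) * (z \<bullet> k) * g3 i j k ?y\<bar>)"
        unfolding fl by (rule abs_sum3)
      also have "\<dots> \<le> (\<Sum>i\<in>Basis. \<Sum>j\<in>Basis. \<Sum>k\<in>Basis. norm z ^ 3 * \<bar>g3 i j k ?y\<bar>)"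
      proof (intro sum_mono)
        fix i j k :: 'a assume ijk: "i \<in> Basis" "j \<in> Basis" "k \<in> Basis"
        have "\<bar>z \<bullet> i\<bar> * \<bar>z \<bullet> j\<bar> * \<bar>z \<bullet> k\<bar> \<le> norm z * norm z * norm z"
          using ijk by (intro mult_mono) (auto simp: Basis_le_norm)
        then show "\<bar>(z \<bullet> i) * (z \<bullet> j) * (z \<bullet> k) * g3 i j k ?y\<bar> \<le> norm z ^ 3 * \<bar>g3 i j k ?y\<bar>"
          by (simp add: abs_mult power3_eq_cube mult_right_mono)
      qed
      also have "\<dots> = norm z ^ 3 * M ?y" by (simp add: M_def sum_distrib_left)
      also have "\<dots> \<le> norm z ^ 3 * B0" using B0 seg[OF that] by (intro mult_left_mono) auto
      finally show ?thesis by (simp add: mult_ac)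
    qed
    have fd: "frechet_derivative H (at m) z = p1 0"
    proof -
      have "m \<in> S" using seg[of 0] K(3) by auto
      then have "frechet_derivative H (at m) = (\<lambda>h. \<Sum>i\<in>Basis. (h \<bullet> i) * g1 i m)"
        using g1(2) frechet_derivative_at by metis
      then show ?thesis by (simp add: p1_def)
    qed
    have e: "H (m + z) - H (m - z) - 2 * frechet_derivative H (at m) z = (p3 t1 + p3 t2) / 6"
      using T1 T2 unfolding fd
      by (simp add: p0_def diff_def numeral_3_eq_3 fact_numeral algebra_simps)
    show "\<bar>H (m + z) - H (m - z) - 2 * frechet_derivative H (at m) z\<bar> \<le> B0 / 3 * norm z ^ 3"
      unfolding e using bnd[of t1] bnd[of t2] t1 t2 by (simp add: abs_le_iff) linarith?
  qed
qed

lemma ddot_inner: "ddot A B = A \<bullet> B"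
  by (simp add: ddot_def inner_vec_def)

lemma tnorm_norm: "tnorm A = norm A"
  by (simp add: tnorm_def ddot_inner norm_eq_sqrt_inner)

lemma Basis_real3: "(Basis :: (real^3) set) = (\<lambda>j. axis j 1) ` UNIV"
  unfolding Basis_vec_def by auto

lemma Eij_Basis: "Eij i j \<in> Basis"
  unfolding Eij_def Basis_vec_def by auto

lemma Basis_tensor: "(b::tensor) \<in> Basis \<Longrightarrow> \<exists>i j. b = Eij i j"
  unfolding Eij_def Basis_vec_def by auto

lemma inner_Eij: "(X::tensor) \<bullet> Eij i j = X$i$j"
  by (simp add: Eij_def inner_axis)

lemma Ck_entry: "Ck k U (\<lambda>X::tensor. X$i$j)"
  using Ck_inner[of k U "Eij i j"] by (simp add: inner_Eij)

lemma Ck_det: "Ck k U (\<lambda>X::tensor. det X)"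
  unfolding det_3 by (intro Ck_add Ck_minus Ck_mult Ck_entry)

lemma entry_le_norm: "\<bar>(X::tensor)$i$j\<bar> \<le> norm X"
  by (rule order_trans[OF component_le_norm_cart Finite_Cartesian_Product.norm_nth_le])

lemma Eij_nth: "Eij i j $ a $ b = (if a = i \<and> b = j then 1 else 0)"
  by (simp add: Eij_def axis_def)

lemma tensor_expand: "(X::tensor) = (\<Sum>i\<in>UNIV. \<Sum>j\<in>UNIV. X$i$j *\<^sub>R Eij i j)"
  by (simp add: vec_eq_iff forall_3 sum_3 Eij_nth)

lemma mvs: "(c *\<^sub>R (A::tensor)) *v x = c *\<^sub>R (A *v x)"
  by (simp add: vec_eq_iff matrix_vector_mult_def sum_distrib_left mult_ac)

lemma mms_left: "(c *\<^sub>R (A::tensor)) ** B = c *\<^sub>R (A ** B)"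
  by (simp add: vec_eq_iff matrix_matrix_mult_def sum_distrib_left mult_ac)

lemma mms_right: "(A::tensor) ** (c *\<^sub>R B) = c *\<^sub>R (A ** B)"
  by (simp add: vec_eq_iff matrix_matrix_mult_def sum_distrib_left mult_ac)

lemma transpose_inner: "transpose (A::tensor) \<bullet> B = A \<bullet> transpose B"
  unfolding inner_vec_def transpose_def by simp (rule sum.swap)

lemma sym_entry: "transpose (X::tensor) = X \<Longrightarrow> X$j$i = X$i$j"
proof -
  assume "transpose X = X"
  then have "transpose X $ i $ j = X $ i $ j" by simp
  then show ?thesis by (simp add: transpose_def)
qed

lemma transpose_add_t: "transpose ((A::tensor) + B) = transpose A + transpose B"
  by (simp add: transpose_def vec_eq_iff)

lemma transpose_diff_t: "transpose ((A::tensor) - B) = transpose A - transpose B"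
  by (simp add: transpose_def vec_eq_iff)

lemma spd_scale: "spd C \<Longrightarrow> c > 0 \<Longrightarrow> spd (c *\<^sub>R C)"
  unfolding spd_def by (auto simp: transpose_scalar mvs)

lemma spd_convex: "convex {X. spd X}"
proof (rule convexI)
  fix A B :: tensor and u v :: real
  assume A: "A \<in> {X. spd X}" and B: "B \<in> {X. spd X}" and uv: "0 \<le> u" "0 \<le> v" "u + v = 1"
  show "u *\<^sub>R A + v *\<^sub>R B \<in> {X. spd X}"
    unfolding mem_Collect_eq spd_def
  proof (intro conjI allI impI)
    show "transpose (u *\<^sub>R A + v *\<^sub>R B) = u *\<^sub>R A + v *\<^sub>R B"
      using A B by (simp add: spd_def transpose_add_t transpose_scalar)
    fix x :: "real^3" assume x: "x \<noteq> 0"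
    have a: "x \<bullet> (A *v x) > 0" and b: "x \<bullet> (B *v x) > 0" using A B x by (auto simp: spd_def)
    have "x \<bullet> ((u *\<^sub>R A + v *\<^sub>R B) *v x) = u * (x \<bullet> (A *v x)) + v * (x \<bullet> (B *v x))"
      by (simp add: matrix_vector_mult_add_rdistrib mvs inner_add_right)
    moreover have "u * (x \<bullet> (A *v x)) + v * (x \<bullet> (B *v x)) > 0"
    proof (cases "u = 0")
      case True then have "v = 1" using uv by simp
      then show ?thesis using True b by simp
    next
      case False then have "u > 0" using uv by simp
      then show ?thesis using a b uv by (simp add: add_pos_nonneg)
    qed
    ultimately show "x \<bullet> ((u *\<^sub>R A + v *\<^sub>R B) *v x) > 0" by simp
  qed
qed

lemma spd_mat1: "spd (mat 1 :: tensor)"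
  unfolding spd_def by simp

lemma spd_det_nz: "spd C \<Longrightarrow> det (C::tensor) \<noteq> 0"
proof -
  assume C: "spd C"
  have "inj ((*v) C)"
  proof (rule injI)
    fix x y assume "C *v x = C *v y"
    then have "C *v (x - y) = 0" by (simp add: matrix_vector_mult_diff_distrib)
    show "x = y"
    proof (rule ccontr)
      assume "x \<noteq> y" then have "x - y \<noteq> 0" by simp
      then have "(x - y) \<bullet> (C *v (x - y)) > 0" using C unfolding spd_def by blast
      then show False using \<open>C *v (x - y) = 0\<close> by simp
    qed
  qed
  then show ?thesis
    using det_nz_iff_inj[of "(*v) C"] by simp
qed

lemma continuous_det: "continuous_on S (\<lambda>X::tensor. det X)"
  using Ck_det[of 0 S] by simp

lemma spd_det_pos: "spd C \<Longrightarrow> det (C::tensor) > 0"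
proof (rule ccontr)
  assume C: "spd C" and n: "\<not> det C > 0"
  define p where "p t = det ((1 - t) *\<^sub>R mat 1 + t *\<^sub>R C)" for t :: real
  have pc: "continuous_on {0..1} p" unfolding p_def
    by (rule continuous_on_compose2[OF continuous_det[of UNIV]]) (auto intro!: continuous_intros)
  have "p 1 \<le> 0" "0 \<le> p 0" using n by (auto simp: p_def)
  from IVT2'[of p 1 0 0, OF this _ pc] obtain t where t: "0 \<le> t" "t \<le> 1" "p t = 0" by auto
  have "spd ((1 - t) *\<^sub>R mat 1 + t *\<^sub>R C)"
    using convexD[OF spd_convex, of "mat 1" C "1 - t" t] spd_mat1 C t by auto
  then show False using spd_det_nz t(3) p_def by auto
qed

lemma Ctil_spd: "spd C \<Longrightarrow> spd (Ctil C)"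
proof -
  assume C: "spd C"
  then have "det C > 0" by (rule spd_det_pos)
  then have "det C powr (-1/3) > 0" by simp
  then show ?thesis unfolding Ctil_def using C by (rule spd_scale[rotated])
qed

definition adjt :: "tensor \<Rightarrow> tensor" where
  "adjt A = vector [
     vector [A$2$2*A$3$3 - A$2$3*A$3$2, A$1$3*A$3$2 - A$1$2*A$3$3, A$1$2*A$2$3 - A$1$3*A$2$2],
     vector [A$2$3*A$3$1 - A$2$1*A$3$3, A$1$1*A$3$3 - A$1$3*A$3$1, A$1$3*A$2$1 - A$1$1*A$2$3],
     vector [A$2$1*A$3$2 - A$2$2*A$3$1, A$1$2*A$3$1 - A$1$1*A$3$2, A$1$1*A$2$2 - A$1$2*A$2$1]]"

lemma adjt_nth: "adjt A $ i $ j = (if i = 1 then (if j = 1 then A$2$2*A$3$3 - A$2$3*A$3$2 else if j = 2 then A$1$3*A$3$2 - A$1$2*A$3$3 else A$1$2*A$2$3 - A$1$3*A$2$2)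
   else if i = 2 then (if j = 1 then A$2$3*A$3$1 - A$2$1*A$3$3 else if j = 2 then A$1$1*A$3$3 - A$1$3*A$3$1 else A$1$3*A$2$1 - A$1$1*A$2$3)
   else (if j = 1 then A$2$1*A$3$2 - A$2$2*A$3$1 else if j = 2 then A$1$2*A$3$1 - A$1$1*A$3$2 else A$1$1*A$2$2 - A$1$2*A$2$1))"
  using exhaust_3[of i] exhaust_3[of j] unfolding adjt_def by auto

lemma adjt_right: "A ** adjt A = det A *\<^sub>R mat 1"
  unfolding vec_eq_iff matrix_matrix_mult_def
  by (simp add: forall_3 sum_3 adjt_nth det_3 mat_def algebra_simps)

lemma adjt_left: "adjt A ** A = det A *\<^sub>R mat 1"
  unfolding vec_eq_iff matrix_matrix_mult_def
  by (simp add: forall_3 sum_3 adjt_nth det_3 mat_def algebra_simps)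

lemma matrix_inv_adjt: assumes "det (A::tensor) \<noteq> 0" shows "matrix_inv A = (1 / det A) *\<^sub>R adjt A"
proof -
  let ?M = "(1 / det A) *\<^sub>R adjt A"
  have M: "A ** ?M = mat 1 \<and> ?M ** A = mat 1"
    using assms by (simp add: mms_left mms_right adjt_right adjt_left)
  then have I: "A ** matrix_inv A = mat 1 \<and> matrix_inv A ** A = mat 1"
    unfolding matrix_inv_def by (rule someI)
  have "matrix_inv A = matrix_inv A ** (A ** ?M)" using M by simp
  also have "\<dots> = (matrix_inv A ** A) ** ?M" by (simp add: matrix_mul_assoc)
  also have "\<dots> = ?M" using I by simp
  finally show ?thesis .
qed

lemma has_derivative_entry[derivative_intros]:
  "((\<lambda>X::tensor. X$i$j) has_derivative (\<lambda>H. H$i$j)) F"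
  by (rule bounded_linear_imp_has_derivative)
     (rule bounded_linear_compose[OF bounded_linear_vec_nth bounded_linear_vec_nth])

lemma det_has_derivative: "((\<lambda>X::tensor. det X) has_derivative (\<lambda>H. transpose (adjt C) \<bullet> H)) (at C)"
  unfolding det_3
  apply (rule has_derivative_eq_rhs)
   apply (rule derivative_intros)+
  apply (rule ext)
  apply (simp add: inner_vec_def sum_3 transpose_def adjt_nth algebra_simps)
  done

lemma sum2_half:
  fixes a b x :: "3 \<Rightarrow> 3 \<Rightarrow> real"
  shows "(\<Sum>i\<in>UNIV. \<Sum>j\<in>UNIV. (a i j + b i j) / 2 * x i j)
       = ((\<Sum>i\<in>UNIV. \<Sum>j\<in>UNIV. a i j * x i j) + (\<Sum>i\<in>UNIV. \<Sum>j\<in>UNIV. b i j * x i j)) / 2"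
  by (simp add: sum_3 field_simps)

lemma sgrad_inner:
  assumes g: "(g has_derivative g') (at Y)" and X: "transpose X = X"
  shows "sgrad g Y \<bullet> X = g' X"
proof -
  have fd: "frechet_derivative g (at Y) = g'" using frechet_derivative_at[OF g] by simp
  have lin: "linear g'" using has_derivative_linear[OF g] .
  have s1: "sgrad g Y \<bullet> X = (\<Sum>i\<in>UNIV. \<Sum>j\<in>UNIV. (g' (Eij i j) + g' (Eij j i)) / 2 * X$i$j)"
    by (simp add: sgrad_def inner_vec_def fd)
  have s2: "(\<Sum>i\<in>UNIV. \<Sum>j\<in>UNIV. g' (Eij j i) * X$i$j) = (\<Sum>i\<in>UNIV. \<Sum>j\<in>UNIV. g' (Eij i j) * X$i$j)"
  proof -
    have "(\<Sum>i\<in>UNIV. \<Sum>j\<in>UNIV. g' (Eij j i) * X$i$j) = (\<Sum>j\<in>UNIV. \<Sum>i\<in>UNIV. g' (Eij j i) * X$i$j)"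
      by (rule sum.swap)
    also have "\<dots> = (\<Sum>j\<in>UNIV. \<Sum>i\<in>UNIV. g' (Eij j i) * X$j$i)"
      using sym_entry[OF X] by simp
    finally show ?thesis .
  qed
  have s3: "g' X = (\<Sum>i\<in>UNIV. \<Sum>j\<in>UNIV. g' (Eij i j) * X$i$j)"
  proof -
    have "g' X = g' (\<Sum>i\<in>UNIV. \<Sum>j\<in>UNIV. X$i$j *\<^sub>R Eij i j)" using tensor_expand[of X] by simp
    also have "\<dots> = (\<Sum>i\<in>UNIV. \<Sum>j\<in>UNIV. X$i$j * g' (Eij i j))"
      by (simp add: linear_sum[OF lin] linear_scale[OF lin])
    finally show ?thesis by (simp add: mult.commute)
  qed
  show ?thesis unfolding s1 sum2_half s2 s3 by simp
qed

lemma Ctil_has_derivative: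
  assumes C: "det C > 0"
  shows "(Ctil has_derivative (\<lambda>H. det C powr (-1/3) *\<^sub>R H +
      ((-1/3) * det C powr (-1/3) * (transpose (matrix_inv C) \<bullet> H)) *\<^sub>R C)) (at C)"
proof -
  define e where "e = det C powr (-1/3 - 1)"
  define d0 where "d0 = det C powr (-1/3)"
  have p: "((\<lambda>y. y powr (-1/3)) has_real_derivative (-1/3) * e) (at (det C))"
    using C unfolding e_def by (auto intro!: derivative_eq_intros)
  have adj: "adjt C = det C *\<^sub>R matrix_inv C" using matrix_inv_adjt[of C] C by simp
  have c: "e * det C = d0"
  proof -
    have "det C powr (-1/3 - 1) * det C powr 1 = det C powr ((-1/3 - 1) + 1)" by (rule powr_add[symmetric])
    then show ?thesis using C unfolding e_def d0_def by simp
  qed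
  have d: "((\<lambda>X. det X powr (-1/3)) has_derivative
      (\<lambda>H. (-1/3) * d0 * (transpose (matrix_inv C) \<bullet> H))) (at C)"
  proof -
    have "((\<lambda>X. det X powr (-1/3)) has_derivative
      (\<lambda>H. (-1/3) * e * (transpose (adjt C) \<bullet> H))) (at C)"
      using has_derivative_compose[OF det_has_derivative[of C] p[unfolded has_field_derivative_def]]
      by (simp add: o_def mult_ac)
    moreover have "(\<lambda>H. (-1/3) * e * (transpose (adjt C) \<bullet> H))
        = (\<lambda>H. (-1/3) * d0 * (transpose (matrix_inv C) \<bullet> H))"
      by (rule ext) (simp add: adj transpose_scalar c[symmetric] mult_ac)
    ultimately show ?thesis by simp
  qed
  have "((\<lambda>X. det X powr (-1/3) *\<^sub>R X) has_derivative (\<lambda>H. det C powr (-1/3) *\<^sub>R H +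
      ((-1/3) * d0 * (transpose (matrix_inv C) \<bullet> H)) *\<^sub>R C)) (at C)"
    by (rule has_derivative_scaleR[OF d has_derivative_ident])
  then show ?thesis unfolding Ctil_def[abs_def] d0_def .
qed

lemma key_identity:
  assumes C: "spd C" and Z: "transpose Z = Z" and g: "(g has_derivative g') (at (Ctil C))"
  shows "2 * frechet_derivative (\<lambda>X. g (Ctil X)) (at C) Z =
    (let St = 2 *\<^sub>R sgrad g (Ctil C) in det C powr (-1/3) *\<^sub>R (St - ((1/3) * ddot C St) *\<^sub>R matrix_inv C)) \<bullet> Z"
proof -
  have dC: "det C > 0" using spd_det_pos[OF C] .
  have Cs: "transpose C = C" using C by (simp add: spd_def)
  define d where "d = det C powr (-1/3)"
  define q where "q H = transpose (matrix_inv C) \<bullet> H" for H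
  define DC where "DC H = d *\<^sub>R H + ((-1/3) * d * q H) *\<^sub>R C" for H
  have DCd: "(Ctil has_derivative DC) (at C)"
    using Ctil_has_derivative[OF dC] unfolding DC_def d_def q_def .
  have "((\<lambda>X. g (Ctil X)) has_derivative (\<lambda>H. g' (DC H))) (at C)"
    using has_derivative_compose[OF DCd g] by (simp add: o_def)
  then have "frechet_derivative (\<lambda>X. g (Ctil X)) (at C) = (\<lambda>H. g' (DC H))"
    by (rule frechet_derivative_at[symmetric])
  then have fd: "frechet_derivative (\<lambda>X. g (Ctil X)) (at C) Z = g' (DC Z)" by simp
  have DCs: "transpose (DC Z) = DC Z"
    by (simp add: DC_def transpose_add_t transpose_diff_t transpose_scalar Z Cs)
  define s where "s = sgrad g (Ctil C)"
  have gs: "g' (DC Z) = s \<bullet> DC Z" using sgrad_inner[OF g DCs] by (simp add: s_def)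
  have qZ: "q Z = matrix_inv C \<bullet> Z" unfolding q_def by (simp add: transpose_inner Z)
  have "2 * g' (DC Z) = 2 * d * (s \<bullet> Z) - (2/3) * d * (matrix_inv C \<bullet> Z) * (s \<bullet> C)"
    unfolding gs unfolding DC_def qZ by (simp add: inner_add_right algebra_simps)
  also have "\<dots> = (let St = 2 *\<^sub>R s in d *\<^sub>R (St - ((1/3) * ddot C St) *\<^sub>R matrix_inv C)) \<bullet> Z"
    by (simp add: Let_def ddot_inner inner_diff_left inner_commute algebra_simps)
  finally show ?thesis unfolding fd s_def d_def .
qed

definition Rem :: "(tensor \<Rightarrow> real) \<Rightarrow> tensor \<Rightarrow> tensor \<Rightarrow> real" where
  "Rem H x z = H (x + z) - H (x - z) - 2 * frechet_derivative H (at x) z"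

lemma half_sum: fixes x z :: "'a::euclidean_space"
  shows "(1/2) *\<^sub>R (x - z) + (1/2) *\<^sub>R (x + z) = x"
  by (rule euclidean_eqI) (simp add: inner_add_left inner_diff_left algebra_simps)

lemma Ck_Suc_diff: "Ck (Suc k) S f \<Longrightarrow> x \<in> S \<Longrightarrow> \<exists>f'. (f has_derivative f') (at x)"
  by (auto simp only: Ck.simps)

lemma Ck3_diff: "Ck 3 S f \<Longrightarrow> x \<in> S \<Longrightarrow> \<exists>f'. (f has_derivative f') (at x)"
  unfolding Ck_3 by (rule Ck_Suc_diff)

lemma Rem_lin:
  fixes P :: "tensor \<Rightarrow> real" and Q :: "'i \<Rightarrow> tensor \<Rightarrow> real"
  assumes I: "finite I" and P: "(P has_derivative P') (at x)"
    and Q: "\<And>p. p \<in> I \<Longrightarrow> (Q p has_derivative Q' p) (at x)"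
  shows "Rem (\<lambda>X. P X + (\<Sum>p\<in>I. c p * Q p X) + k) x z = Rem P x z + (\<Sum>p\<in>I. c p * Rem (Q p) x z)"
proof -
  have F: "((\<lambda>X. P X + (\<Sum>p\<in>I. c p * Q p X) + k) has_derivative (\<lambda>h. P' h + (\<Sum>p\<in>I. c p * Q' p h) + 0)) (at x)"
    by (intro has_derivative_add has_derivative_sum has_derivative_mult_right has_derivative_const P Q)
  have fF: "frechet_derivative (\<lambda>X. P X + (\<Sum>p\<in>I. c p * Q p X) + k) (at x) = (\<lambda>h. P' h + (\<Sum>p\<in>I. c p * Q' p h) + 0)"
    by (rule frechet_derivative_at[OF F, symmetric])
  have fP: "frechet_derivative P (at x) = P'" by (rule frechet_derivative_at[OF P, symmetric])
  have fQ: "\<And>p. p \<in> I \<Longrightarrow> frechet_derivative (Q p) (at x) = Q' p"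
    by (rule frechet_derivative_at[OF Q, symmetric])
  have "(\<Sum>p\<in>I. c p * Rem (Q p) x z) = (\<Sum>p\<in>I. c p * Q p (x + z) - c p * Q p (x - z) - 2 * (c p * Q' p z))"
    unfolding Rem_def by (rule sum.cong) (auto simp: fQ algebra_simps)
  also have "\<dots> = (\<Sum>p\<in>I. c p * Q p (x + z)) - (\<Sum>p\<in>I. c p * Q p (x - z)) - 2 * (\<Sum>p\<in>I. c p * Q' p z)"
    by (simp add: sum_subtractf sum_distrib_left)
  finally show ?thesis unfolding Rem_def fF fP by simp
qed

lemma uniform_rem:
  fixes P :: "tensor \<Rightarrow> real" and Q :: "'i \<Rightarrow> tensor \<Rightarrow> real"
  assumes I: "finite I" and P: "Ck 3 S P" and Q: "\<And>p. p \<in> I \<Longrightarrow> Ck 3 S (Q p)"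
    and K: "compact K" "convex K" "K \<subseteq> S"
  shows "\<exists>B. \<forall>c k x z. (\<forall>p\<in>I. \<bar>c p\<bar> \<le> Cb p) \<longrightarrow> x - z \<in> K \<longrightarrow> x + z \<in> K \<longrightarrow>
     \<bar>Rem (\<lambda>X. P X + (\<Sum>p\<in>I. c p * Q p X) + k) x z\<bar> \<le> B * norm z ^ 3"
proof -
  obtain BP where BP: "\<forall>x z. x - z \<in> K \<and> x + z \<in> K \<longrightarrow> \<bar>Rem P x z\<bar> \<le> BP * norm z ^ 3"
    using taylor3[OF P K] unfolding Rem_def by blast
  have "\<forall>p\<in>I. \<exists>B. \<forall>x z. x - z \<in> K \<and> x + z \<in> K \<longrightarrow> \<bar>Rem (Q p) x z\<bar> \<le> B * norm z ^ 3"
    using taylor3[OF Q K] unfolding Rem_def by blast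
  from bchoice[OF this] obtain BQ where BQ: "\<forall>p\<in>I. \<forall>x z. x - z \<in> K \<and> x + z \<in> K \<longrightarrow> \<bar>Rem (Q p) x z\<bar> \<le> BQ p * norm z ^ 3"
    by blast
  show ?thesis
  proof (intro exI[where x="\<bar>BP\<bar> + (\<Sum>p\<in>I. \<bar>Cb p\<bar> * \<bar>BQ p\<bar>)"] allI impI)
    fix c :: "'i \<Rightarrow> real" and k :: real and x z :: tensor
    assume c: "\<forall>p\<in>I. \<bar>c p\<bar> \<le> Cb p" and xz: "x - z \<in> K" "x + z \<in> K"
    have xK: "x \<in> K"
    proof -
      have "x = (1/2) *\<^sub>R (x - z) + (1/2) *\<^sub>R (x + z)" by (rule half_sum[symmetric])
      also have "\<dots> \<in> K" using convexD[OF K(2) xz] by simp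
      finally show ?thesis .
    qed
    then have xS: "x \<in> S" using K(3) by auto
    obtain P' where P': "(P has_derivative P') (at x)" using Ck3_diff[OF P xS] by blast
    have "\<forall>p\<in>I. \<exists>f'. (Q p has_derivative f') (at x)" using Ck3_diff[OF Q xS] by blast
    from bchoice[OF this] obtain Q' where Q': "\<forall>p\<in>I. (Q p has_derivative Q' p) (at x)" by blast
    have "\<bar>Rem (\<lambda>X. P X + (\<Sum>p\<in>I. c p * Q p X) + k) x z\<bar> = \<bar>Rem P x z + (\<Sum>p\<in>I. c p * Rem (Q p) x z)\<bar>"
      using Rem_lin[OF I P', of Q Q' c k z] Q' by simp
    also have "\<dots> \<le> \<bar>Rem P x z\<bar> + (\<Sum>p\<in>I. \<bar>c p\<bar> * \<bar>Rem (Q p) x z\<bar>)"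
      by (rule order_trans[OF abs_triangle_ineq]) (simp add: order_trans[OF sum_abs] abs_mult)
    also have "\<dots> \<le> \<bar>BP\<bar> * norm z ^ 3 + (\<Sum>p\<in>I. \<bar>Cb p\<bar> * (\<bar>BQ p\<bar> * norm z ^ 3))"
    proof (rule add_mono)
      show "\<bar>Rem P x z\<bar> \<le> \<bar>BP\<bar> * norm z ^ 3"
        using BP xz by (meson abs_ge_self mult_right_mono norm_ge_zero order_trans zero_le_power)
      show "(\<Sum>p\<in>I. \<bar>c p\<bar> * \<bar>Rem (Q p) x z\<bar>) \<le> (\<Sum>p\<in>I. \<bar>Cb p\<bar> * (\<bar>BQ p\<bar> * norm z ^ 3))"
      proof (rule sum_mono)
        fix p assume p: "p \<in> I"
        have r: "\<bar>Rem (Q p) x z\<bar> \<le> \<bar>BQ p\<bar> * norm z ^ 3"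
          using BQ p xz by (meson abs_ge_self mult_right_mono norm_ge_zero order_trans zero_le_power)
        have "\<bar>c p\<bar> \<le> \<bar>Cb p\<bar>" using c p by force
        then show "\<bar>c p\<bar> * \<bar>Rem (Q p) x z\<bar> \<le> \<bar>Cb p\<bar> * (\<bar>BQ p\<bar> * norm z ^ 3)"
          using r by (intro mult_mono) auto
      qed
    qed
    also have "\<dots> = (\<bar>BP\<bar> + (\<Sum>p\<in>I. \<bar>Cb p\<bar> * \<bar>BQ p\<bar>)) * norm z ^ 3"
      by (simp add: distrib_right sum_distrib_right mult.assoc)
    finally show "\<bar>Rem (\<lambda>X. P X + (\<Sum>p\<in>I. c p * Q p X) + k) x z\<bar> \<le> (\<bar>BP\<bar> + (\<Sum>p\<in>I. \<bar>Cb p\<bar> * \<bar>BQ p\<bar>)) * norm z ^ 3" .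
  qed
qed

lemma basis_pick: "(c::'a::euclidean_space) \<in> Basis \<Longrightarrow> (\<Sum>b\<in>Basis. (c \<bullet> b) * f b) = f c"
proof -
  assume c: "c \<in> Basis"
  have "(\<Sum>b\<in>Basis. (c \<bullet> b) * f b) = (\<Sum>b\<in>Basis. if b = c then f c else 0)"
    by (rule sum.cong) (auto simp: inner_Basis c)
  also have "\<dots> = f c" using c by simp
  finally show ?thesis .
qed

lemma smooth_partials:
  fixes f :: "'a::euclidean_space \<Rightarrow> real"
  assumes U: "open U" and s: "smooth_on U f"
  shows "\<exists>D::'a list \<Rightarrow> 'a \<Rightarrow> real. D [] = f \<and> (\<forall>l k. set l \<subseteq> Basis \<longrightarrow> Ck k U (D l)) \<and>
     (\<forall>x\<in>U. (f has_derivative (\<lambda>h. \<Sum>b\<in>Basis. (h \<bullet> b) * D [b] x)) (at x))"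
proof -
  obtain D where D0: "D [] = f" and D: "\<forall>l. set l \<subseteq> Basis \<longrightarrow> continuous_on U (D l) \<and>
        (\<forall>x\<in>U. (D l has_derivative (\<lambda>h. \<Sum>i\<in>Basis. (h \<bullet> i) *\<^sub>R D (i # l) x)) (at x within U))"
    using s unfolding smooth_on_def by (elim exE conjE) (rule that)
  have ck: "\<forall>l k. set l \<subseteq> Basis \<longrightarrow> Ck k U (D l)" using smooth_Ck_aux[OF U D] by blast
  have dv: "\<forall>x\<in>U. (f has_derivative (\<lambda>h. \<Sum>b\<in>Basis. (h \<bullet> b) * D [b] x)) (at x)"
  proof
    fix x assume x: "x \<in> U"
    have "(D [] has_derivative (\<lambda>h. \<Sum>i\<in>Basis. (h \<bullet> i) *\<^sub>R D [i] x)) (at x within U)"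
      using bspec[OF conjunct2[OF mp[OF spec[OF D, of "[]"]]] x] by simp
    then show "(f has_derivative (\<lambda>h. \<Sum>b\<in>Basis. (h \<bullet> b) * D [b] x)) (at x)"
      unfolding at_within_open[OF x U] D0 by simp
  qed
  show ?thesis by (rule exI[where x=D]) (use D0 ck dv in blast)
qed

lemma Ck_Siso_alpha_entry:
  assumes U: "open U" and SU: "S \<subseteq> U" and s: "smooth_on U g"
  shows "Ck k S (\<lambda>Y. Siso_alpha g Y $ i $ j)"
proof -
  obtain D where D0: "D [] = g" and ck: "\<forall>l k. set l \<subseteq> Basis \<longrightarrow> Ck k U (D l)"
    and dv: "\<forall>x\<in>U. (g has_derivative (\<lambda>h. \<Sum>b\<in>Basis. (h \<bullet> b) * D [b] x)) (at x)"
    using smooth_partials[OF U s] by blast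
  have eq: "Siso_alpha g Y $ i $ j = D [Eij i j] Y + D [Eij j i] Y" if Y: "Y \<in> U" for Y
  proof -
    have "frechet_derivative g (at Y) = (\<lambda>h. \<Sum>b\<in>Basis. (h \<bullet> b) * D [b] Y)"
      using frechet_derivative_at[OF bspec[OF dv Y]] by simp
    then show ?thesis
      by (simp add: Siso_alpha_def sgrad_def basis_pick[OF Eij_Basis])
  qed
  have "Ck k U (\<lambda>Y. D [Eij i j] Y + D [Eij j i] Y)"
    using ck Eij_Basis by (intro Ck_add) auto
  then have "Ck k U (\<lambda>Y. Siso_alpha g Y $ i $ j)"
    using Ck_cong_open[OF U, of "\<lambda>Y. Siso_alpha g Y $ i $ j" "\<lambda>Y. D [Eij i j] Y + D [Eij j i] Y" k] eq by blast
  then show ?thesis using SU by (rule Ck_subset[rotated])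
qed

lemma Ck_Ctil_comp:
  assumes h: "Ck k {X. spd X} h"
  shows "Ck k {X. spd X} (\<lambda>X. h (Ctil X))"
proof (rule Ck_compose[OF h])
  show "Ctil ` {X. spd X} \<subseteq> {X. spd X}" using Ctil_spd by auto
  have dp: "Ck k {X::tensor. spd X} (\<lambda>X. det X powr (-1/3))"
  proof (rule Ck_compose[OF Ck_powr[of k "-1/3"]])
    show "\<forall>b\<in>Basis. Ck k {X::tensor. spd X} (\<lambda>X. det X \<bullet> b)" using Ck_det by simp
    show "(\<lambda>X. det X) ` {X::tensor. spd X} \<subseteq> {0<..}" using spd_det_pos by auto
  qed
  show "\<forall>b\<in>Basis. Ck k {X. spd X} (\<lambda>X. Ctil X \<bullet> b)"
  proof
    fix b :: tensor assume "b \<in> Basis"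
    then obtain i j where b: "b = Eij i j" using Basis_tensor by blast
    have "Ck k {X. spd X} (\<lambda>X. det X powr (-1/3) * X $ i $ j)"
      by (rule Ck_mult[OF dp Ck_entry])
    then show "Ck k {X. spd X} (\<lambda>X. Ctil X \<bullet> b)"
      by (simp add: b inner_Eij Ctil_def)
  qed
qed

lemma sum3_prod:
  "(\<Sum>\<alpha>\<in>M. \<Sum>i\<in>(UNIV::3 set). \<Sum>j\<in>(UNIV::3 set). f \<alpha> i j)
   = (\<Sum>p\<in>M \<times> UNIV \<times> UNIV. f (fst p) (fst (snd p)) (snd (snd p)))"
  by (simp add: sum.cartesian_product split_def)

lemma norm_sq_expand:
  fixes A B :: tensor
  shows "(norm (A - B))\<^sup>2 = A \<bullet> A + (\<Sum>i\<in>UNIV. \<Sum>j\<in>UNIV. (-2 * B$i$j) * A$i$j) + B \<bullet> B"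
proof -
  have "A \<bullet> B = (\<Sum>i\<in>UNIV. \<Sum>j\<in>UNIV. A$i$j * B$i$j)" by (simp add: inner_vec_def)
  then have "(\<Sum>i\<in>UNIV. \<Sum>j\<in>UNIV. (-2 * B$i$j) * A$i$j) = -2 * (A \<bullet> B)"
    by (simp add: sum_distrib_left mult_ac)
  moreover have "(norm (A - B))\<^sup>2 = A \<bullet> A - 2 * (A \<bullet> B) + B \<bullet> B"
    by (simp add: power2_norm_eq_inner inner_diff_left inner_diff_right inner_commute)
  ultimately show ?thesis by simp
qed

lemma Giso_decomp:
  "Giso m mu S0 G Ginf Y Gam =
     (Ginf Y + (\<Sum>\<alpha>\<in>{1..m}. 1 / (4 * mu \<alpha>) * (Siso_alpha (G \<alpha>) Y \<bullet> Siso_alpha (G \<alpha>) Y)))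
     + (\<Sum>p\<in>{1..m} \<times> UNIV \<times> UNIV.
          (- (1 / (2 * mu (fst p))) * (S0 (fst p) + mu (fst p) *\<^sub>R (Gam (fst p) - mat 1)) $ fst (snd p) $ snd (snd p))
          * Siso_alpha (G (fst p)) Y $ fst (snd p) $ snd (snd p))
     + (\<Sum>\<alpha>\<in>{1..m}. 1 / (4 * mu \<alpha>) * ((S0 \<alpha> + mu \<alpha> *\<^sub>R (Gam \<alpha> - mat 1)) \<bullet> (S0 \<alpha> + mu \<alpha> *\<^sub>R (Gam \<alpha> - mat 1))))"
proof -
  define A where "A \<alpha> = Siso_alpha (G \<alpha>) Y" for \<alpha>
  define B where "B \<alpha> = S0 \<alpha> + mu \<alpha> *\<^sub>R (Gam \<alpha> - mat 1)" for \<alpha>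
  have U: "Upsilon (mu \<alpha>) (S0 \<alpha>) (G \<alpha>) Y (Gam \<alpha>) =
      1 / (4 * mu \<alpha>) * (A \<alpha> \<bullet> A \<alpha>) + (\<Sum>i\<in>UNIV. \<Sum>j\<in>UNIV. (- (1 / (2 * mu \<alpha>)) * B \<alpha> $ i $ j) * A \<alpha> $ i $ j)
      + 1 / (4 * mu \<alpha>) * (B \<alpha> \<bullet> B \<alpha>)" for \<alpha>
  proof -
    have "Siso_alpha (G \<alpha>) Y - S0 \<alpha> - mu \<alpha> *\<^sub>R (Gam \<alpha> - mat 1) = A \<alpha> - B \<alpha>"
      by (simp add: A_def B_def)
    then have "Upsilon (mu \<alpha>) (S0 \<alpha>) (G \<alpha>) Y (Gam \<alpha>) = 1 / (4 * mu \<alpha>) * (norm (A \<alpha> - B \<alpha>))\<^sup>2"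
      by (simp add: Upsilon_def tnorm_norm)
    also have "\<dots> = 1 / (4 * mu \<alpha>) * (A \<alpha> \<bullet> A \<alpha>) + (\<Sum>i\<in>UNIV. \<Sum>j\<in>UNIV. (1 / (4 * mu \<alpha>)) * ((-2 * B \<alpha> $ i $ j) * A \<alpha> $ i $ j))
      + 1 / (4 * mu \<alpha>) * (B \<alpha> \<bullet> B \<alpha>)"
      unfolding norm_sq_expand by (simp add: distrib_left sum_distrib_left)
    also have "(\<Sum>i\<in>UNIV. \<Sum>j\<in>UNIV. (1 / (4 * mu \<alpha>)) * ((-2 * B \<alpha> $ i $ j) * A \<alpha> $ i $ j))
        = (\<Sum>i\<in>UNIV. \<Sum>j\<in>UNIV. (- (1 / (2 * mu \<alpha>)) * B \<alpha> $ i $ j) * A \<alpha> $ i $ j)"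
      by (rule sum.cong[OF refl], rule sum.cong[OF refl]) (simp add: field_simps)
    finally show ?thesis .
  qed
  have "Giso m mu S0 G Ginf Y Gam = Ginf Y + (\<Sum>\<alpha>\<in>{1..m}. 1 / (4 * mu \<alpha>) * (A \<alpha> \<bullet> A \<alpha>))
     + (\<Sum>\<alpha>\<in>{1..m}. \<Sum>i\<in>UNIV. \<Sum>j\<in>UNIV. (- (1 / (2 * mu \<alpha>)) * B \<alpha> $ i $ j) * A \<alpha> $ i $ j)
     + (\<Sum>\<alpha>\<in>{1..m}. 1 / (4 * mu \<alpha>) * (B \<alpha> \<bullet> B \<alpha>))"
    unfolding Giso_def U by (simp add: sum.distrib)
  then show ?thesis unfolding sum3_prod A_def B_def by simp
qed

lemma smooth_lipschitz:
  fixes C :: "real \<Rightarrow> tensor"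
  assumes s: "smooth_on {a..b} C"
  shows "\<exists>L\<ge>0. \<forall>s\<in>{a..b}. \<forall>t\<in>{a..b}. norm (C s - C t) \<le> L * \<bar>s - t\<bar>"
proof -
  obtain D where D0: "D [] = C" and D: "\<forall>l. set l \<subseteq> Basis \<longrightarrow> continuous_on {a..b} (D l) \<and>
        (\<forall>x\<in>{a..b}. (D l has_derivative (\<lambda>h. \<Sum>i\<in>Basis. (h \<bullet> i) *\<^sub>R D (i # l) x)) (at x within {a..b}))"
    using s unfolding smooth_on_def by (elim exE conjE) (rule that)
  have c1: "continuous_on {a..b} (D [1])" using conjunct1[OF mp[OF spec[OF D, of "[1]"]]] by simp
  have "bounded (D [1] ` {a..b})" by (rule compact_imp_bounded[OF compact_continuous_image[OF c1 compact_Icc]])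
  then obtain L0 where L0: "\<forall>x\<in>{a..b}. norm (D [1] x) \<le> L0" unfolding bounded_iff by auto
  have der: "(C has_derivative (\<lambda>h. h *\<^sub>R D [1] x)) (at x within {a..b})" if x: "x \<in> {a..b}" for x
    using bspec[OF conjunct2[OF mp[OF spec[OF D, of "[]"]]] x] D0 by simp
  have on: "onorm (\<lambda>h. h *\<^sub>R D [1] x) \<le> max 0 L0" if x: "x \<in> {a..b}" for x
  proof -
    have "onorm (\<lambda>h::real. h *\<^sub>R D [1] x) = onorm (\<lambda>h::real. h) * norm (D [1] x)"
      by (rule onorm_scaleR_left[OF bounded_linear_ident])
    also have "\<dots> = norm (D [1] x)" by (simp add: onorm_id)
    moreover have "norm (D [1] x) \<le> L0" using L0 x by blast
    ultimately show ?thesis by linarith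
  qed
  show ?thesis
  proof (intro exI[where x="max 0 L0"] conjI ballI)
    fix s t assume "s \<in> {a..b}" "t \<in> {a..b}"
    from differentiable_bound[OF convex_real_interval(5) der on this]
    show "norm (C s - C t) \<le> max 0 L0 * \<bar>s - t\<bar>" by simp
  qed simp
qed

lemma vd_bound:
  fixes f :: "real \<Rightarrow> tensor"
  assumes "\<forall>t\<in>{0..T}. (f has_vector_derivative f' t) (at t within {0..T})"
  shows "\<exists>M. \<forall>t\<in>{0..T}. norm (f t) \<le> M"
proof -
  have "continuous_on {0..T} f"
    unfolding continuous_on_eq_continuous_within
    using assms has_vector_derivative_continuous by blast
  then have "bounded (f ` {0..T})" by (rule compact_imp_bounded[OF compact_continuous_image[OF _ compact_Icc]])
  then show ?thesis unfolding bounded_iff by auto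
qed

lemma half_sum2:
  fixes a b :: "'a::euclidean_space"
  shows "(1/2) *\<^sub>R (a + b) + (1/2) *\<^sub>R (b - a) = b" "(1/2) *\<^sub>R (a + b) - (1/2) *\<^sub>R (b - a) = a"
  by (rule euclidean_eqI, simp add: inner_add_left inner_diff_left algebra_simps)+

theorem proposition4:
  fixes m :: nat and mu eta :: "nat \<Rightarrow> real" and S0 :: "nat \<Rightarrow> tensor"
    and G :: "nat \<Rightarrow> tensor \<Rightarrow> real" and Ginf :: "tensor \<Rightarrow> real"
    and T :: real and C :: "real \<Rightarrow> tensor" and Gam :: "nat \<Rightarrow> real \<Rightarrow> tensor"
  assumes m: "m \<ge> 1"
    and mu: "\<forall>\<alpha>\<in>{1..m}. mu \<alpha> > 0"
    and eta: "\<forall>\<alpha>\<in>{1..m}. eta \<alpha> > 0"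
    and S0sym: "\<forall>\<alpha>\<in>{1..m}. transpose (S0 \<alpha>) = S0 \<alpha>"
    and Gsmooth: "\<forall>\<alpha>\<in>{1..m}. \<exists>U. open U \<and> {X. spd X} \<subseteq> U \<and> smooth_on U (G \<alpha>)"
    and Ginfsmooth: "\<exists>U. open U \<and> {X. spd X} \<subseteq> U \<and> smooth_on U Ginf"
    and T: "T > 0"
    and Csmooth: "smooth_on {0..T} C"
    and Cspd: "\<forall>t\<in>{0..T}. spd (C t)"
    and ode: "\<forall>\<alpha>\<in>{1..m}. \<forall>t\<in>{0..T}.
       (Gam \<alpha> has_vector_derivative
          ((1 / eta \<alpha>) *\<^sub>R (Siso_alpha (G \<alpha>) (Ctil (C t)) - S0 \<alpha> - mu \<alpha> *\<^sub>R (Gam \<alpha> t - mat 1))))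
       (at t within {0..T})"
    and init: "\<forall>\<alpha>\<in>{1..m}. transpose (Gam \<alpha> 0) = Gam \<alpha> 0"
  shows "\<exists>K>0. \<exists>\<delta>>0. \<forall>tn dt. 0 \<le> tn \<and> tn < T \<and> 0 < dt \<and> dt \<le> T - tn \<and> dt \<le> \<delta> \<longrightarrow>
           tnorm (Senh2 m mu S0 G Ginf C Gam tn dt) \<le> K * dt\<^sup>2"
proof -
  define S where "S = {X::tensor. spd X}"
  define I where "I = {1..m} \<times> (UNIV::3 set) \<times> (UNIV::3 set)"
  have fI: "finite I" unfolding I_def by simp
  define Q0 where "Q0 p Y = Siso_alpha (G (fst p)) Y $ fst (snd p) $ snd (snd p)" for p :: "nat \<times> 3 \<times> 3" and Y
  have CkQ0: "Ck 3 S (Q0 p)" if p: "p \<in> I" for p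
  proof -
    have "fst p \<in> {1..m}" using p unfolding I_def by auto
    then obtain U where "open U" "S \<subseteq> U" "smooth_on U (G (fst p))" using Gsmooth unfolding S_def by blast
    from Ck_Siso_alpha_entry[OF this] show ?thesis unfolding Q0_def[abs_def] .
  qed
  obtain Ui where Ui: "open Ui" "S \<subseteq> Ui" "smooth_on Ui Ginf" using Ginfsmooth unfolding S_def by blast
  have CkGinf: "Ck 3 S Ginf"
  proof -
    obtain D :: "tensor list \<Rightarrow> tensor \<Rightarrow> real" where "D [] = Ginf" "\<forall>l k. set l \<subseteq> Basis \<longrightarrow> Ck k Ui (D l)"
      using smooth_partials[OF Ui(1) Ui(3)] by blast
    then have "Ck 3 Ui Ginf" by force
    then show ?thesis using Ui(2) by (rule Ck_subset[rotated])
  qed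
  define P0 where "P0 Y = Ginf Y + (\<Sum>\<alpha>\<in>{1..m}. 1 / (4 * mu \<alpha>) * (Siso_alpha (G \<alpha>) Y \<bullet> Siso_alpha (G \<alpha>) Y))" for Y
  have CkP0: "Ck 3 S P0"
  proof -
    have eq: "P0 Y = Ginf Y + (\<Sum>\<alpha>\<in>{1..m}. 1 / (4 * mu \<alpha>) * (\<Sum>i\<in>UNIV. \<Sum>j\<in>UNIV. Q0 (\<alpha>, i, j) Y * Q0 (\<alpha>, i, j) Y))" for Y
      by (simp add: P0_def Q0_def inner_vec_def)
    have "Ck 3 S (\<lambda>Y. Ginf Y + (\<Sum>\<alpha>\<in>{1..m}. 1 / (4 * mu \<alpha>) * (\<Sum>i\<in>UNIV. \<Sum>j\<in>UNIV. Q0 (\<alpha>, i, j) Y * Q0 (\<alpha>, i, j) Y)))"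
      by (intro Ck_add CkGinf Ck_sum Ck_cmult Ck_mult) (auto simp: I_def intro: CkQ0)
    then show ?thesis unfolding eq[abs_def] .
  qed
  define P where "P X = P0 (Ctil X)" for X
  define Q where "Q p X = Q0 p (Ctil X)" for p X
  have CkP: "Ck 3 S P" unfolding P_def[abs_def] using CkP0 unfolding S_def by (rule Ck_Ctil_comp)
  have CkQ: "Ck 3 S (Q p)" if "p \<in> I" for p
    unfolding Q_def[abs_def] using CkQ0[OF that] unfolding S_def by (rule Ck_Ctil_comp)
  define cf where "cf p Gm = - (1 / (2 * mu (fst p))) * (S0 (fst p) + mu (fst p) *\<^sub>R (Gm (fst p) - mat 1)) $ fst (snd p) $ snd (snd p)"
    for p :: "nat \<times> 3 \<times> 3" and Gm :: "nat \<Rightarrow> tensor"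
  define k0 where "k0 Gm = (\<Sum>\<alpha>\<in>{1..m}. 1 / (4 * mu \<alpha>) * ((S0 \<alpha> + mu \<alpha> *\<^sub>R (Gm \<alpha> - mat 1)) \<bullet> (S0 \<alpha> + mu \<alpha> *\<^sub>R (Gm \<alpha> - mat 1))))"
    for Gm :: "nat \<Rightarrow> tensor"
  have decomp: "Giso m mu S0 G Ginf Y Gm = P0 Y + (\<Sum>p\<in>I. cf p Gm * Q0 p Y) + k0 Gm" for Y Gm
    unfolding Giso_decomp[of m mu S0 G Ginf Y Gm] P0_def cf_def Q0_def k0_def I_def by simp
  have Sconv: "convex S" unfolding S_def by (rule spd_convex)
  have Ccont: "continuous_on {0..T} C"
  proof -
    obtain D where D0: "D [] = C" and D: "\<forall>l. set l \<subseteq> Basis \<longrightarrow> continuous_on {0..T} (D l) \<and>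
        (\<forall>x\<in>{0..T}. (D l has_derivative (\<lambda>h. \<Sum>i\<in>Basis. (h \<bullet> i) *\<^sub>R D (i # l) x)) (at x within {0..T}))"
      using Csmooth unfolding smooth_on_def by (elim exE conjE) (rule that)
    show ?thesis using conjunct1[OF mp[OF spec[OF D, of "[]"]]] D0 by simp
  qed
  define Ks where "Ks = convex hull (C ` {0..T})"
  have Kc: "compact Ks" unfolding Ks_def
    by (rule compact_convex_hull[OF compact_continuous_image[OF Ccont compact_Icc]])
  have Kv: "convex Ks" unfolding Ks_def by simp
  have KS: "Ks \<subseteq> S" unfolding Ks_def
    by (rule hull_minimal[where S=convex, OF _ Sconv]) (use Cspd S_def in auto)
  have CK: "C t \<in> Ks" if "t \<in> {0..T}" for t
    unfolding Ks_def using that by (intro subsetD[OF hull_subset]) simp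
  have "\<forall>\<alpha>\<in>{1..m}. \<exists>M. \<forall>t\<in>{0..T}. norm (Gam \<alpha> t) \<le> M"
  proof
    fix \<alpha> assume "\<alpha> \<in> {1..m}"
    from vd_bound[OF bspec[OF ode this]] show "\<exists>M. \<forall>t\<in>{0..T}. norm (Gam \<alpha> t) \<le> M" .
  qed
  from bchoice[OF this] obtain MG where MG: "\<forall>\<alpha>\<in>{1..m}. \<forall>t\<in>{0..T}. norm (Gam \<alpha> t) \<le> MG \<alpha>" by blast
  define Cb where "Cb p = (1 / (2 * mu (fst p))) * (norm (S0 (fst p)) + mu (fst p) * (MG (fst p) + norm (mat 1 :: tensor)))" for p :: "nat \<times> 3 \<times> 3"
  have exB: "\<exists>B. \<forall>c k x z. (\<forall>p\<in>I. \<bar>c p\<bar> \<le> Cb p) \<longrightarrow> x - z \<in> Ks \<longrightarrow> x + z \<in> Ks \<longrightarrow>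
     \<bar>Rem (\<lambda>X. P X + (\<Sum>p\<in>I. c p * Q p X) + k) x z\<bar> \<le> B * norm z ^ 3"
    by (rule uniform_rem[OF fI CkP _ Kc Kv KS]) (rule CkQ)
  then obtain B where B: "\<forall>c k x z. (\<forall>p\<in>I. \<bar>c p\<bar> \<le> Cb p) \<longrightarrow> x - z \<in> Ks \<longrightarrow> x + z \<in> Ks \<longrightarrow>
     \<bar>Rem (\<lambda>X. P X + (\<Sum>p\<in>I. c p * Q p X) + k) x z\<bar> \<le> B * norm z ^ 3" by (elim exE) (rule that)
  obtain L where L: "L \<ge> 0" "\<forall>s\<in>{0..T}. \<forall>t\<in>{0..T}. norm (C s - C t) \<le> L * \<bar>s - t\<bar>"
    using smooth_lipschitz[OF Csmooth] by blast
  show ?thesis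
  proof (rule exI[where x="\<bar>B\<bar> * L\<^sup>2 + 1"], intro conjI)
    show "0 < \<bar>B\<bar> * L\<^sup>2 + 1" by (simp add: add_nonneg_pos)
    show "\<exists>\<delta>>0. \<forall>tn dt. 0 \<le> tn \<and> tn < T \<and> 0 < dt \<and> dt \<le> T - tn \<and> dt \<le> \<delta> \<longrightarrow>
           tnorm (Senh2 m mu S0 G Ginf C Gam tn dt) \<le> (\<bar>B\<bar> * L\<^sup>2 + 1) * dt\<^sup>2"
    proof (rule exI[where x="1::real"], intro conjI allI impI)
      show "(0::real) < 1" by simp
      fix tn dt assume H: "0 \<le> tn \<and> tn < T \<and> 0 < dt \<and> dt \<le> T - tn \<and> dt \<le> 1"
      have t0: "tn \<in> {0..T}" and t1: "tn + dt \<in> {0..T}" using H by auto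
      define C0 where "C0 = C tn"
      define C1 where "C1 = C (tn + dt)"
      define Gh where "Gh = (\<lambda>\<alpha>. (1/2) *\<^sub>R (Gam \<alpha> tn + Gam \<alpha> (tn + dt)))"
      define Ch where "Ch = (1/2) *\<^sub>R (C0 + C1)"
      define Z where "Z = (1/2) *\<^sub>R (C1 - C0)"
      define g where "g = (\<lambda>Y. Giso m mu S0 G Ginf Y Gh)"
      define Sh where "Sh = Siso m mu S0 G Ginf Ch Gh"
      have Sen: "Senh2 m mu S0 G Ginf C Gam tn dt =
          (if Z = 0 then 0 else ((g (Ctil C1) - g (Ctil C0) - ddot Sh Z) / (tnorm Z)\<^sup>2) *\<^sub>R Z)"
        unfolding Senh2_def Let_def C0_def C1_def Gh_def Ch_def Z_def g_def Sh_def by simp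
      have Kpos: "0 \<le> (\<bar>B\<bar> * L\<^sup>2 + 1) * dt\<^sup>2" by (intro mult_nonneg_nonneg) auto
      show "tnorm (Senh2 m mu S0 G Ginf C Gam tn dt) \<le> (\<bar>B\<bar> * L\<^sup>2 + 1) * dt\<^sup>2"
      proof (cases "Z = 0")
        case True then show ?thesis using Sen Kpos by (simp add: tnorm_norm)
      next
        case False
        have CK01: "C0 \<in> Ks" "C1 \<in> Ks" using CK t0 t1 unfolding C0_def C1_def by auto
        have spd01: "spd C0" "spd C1" using Cspd t0 t1 unfolding C0_def C1_def by auto
        have ChZ: "Ch + Z = C1" "Ch - Z = C0"
          unfolding Ch_def Z_def by (rule half_sum2(1), rule half_sum2(2))
        have ChS: "spd Ch"
        proof -
          have "(1/2) *\<^sub>R C0 + (1/2) *\<^sub>R C1 \<in> {X. spd X}"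
            using convexD[OF spd_convex, of C0 C1 "1/2" "1/2"] spd01 by simp
          then show ?thesis unfolding Ch_def by (simp add: scaleR_add_right)
        qed
        have Zs: "transpose Z = Z"
          using spd01 unfolding Z_def spd_def by (simp add: transpose_scalar transpose_diff_t)
        have decF: "(\<lambda>X. g (Ctil X)) = (\<lambda>X. P X + (\<Sum>p\<in>I. cf p Gh * Q p X) + k0 Gh)"
          by (rule ext) (simp add: g_def decomp P_def Q_def)
        have CtS: "Ctil Ch \<in> S" using Ctil_spd[OF ChS] unfolding S_def by simp
        obtain P0' where P0': "(P0 has_derivative P0') (at (Ctil Ch))" using Ck3_diff[OF CkP0 CtS] by blast
        have "\<forall>p\<in>I. \<exists>f'. (Q0 p has_derivative f') (at (Ctil Ch))" using Ck3_diff[OF CkQ0 CtS] by blast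
        from bchoice[OF this] obtain Q0' where Q0': "\<forall>p\<in>I. (Q0 p has_derivative Q0' p) (at (Ctil Ch))" by blast
        have geq: "g = (\<lambda>Y. P0 Y + (\<Sum>p\<in>I. cf p Gh * Q0 p Y) + k0 Gh)"
          by (rule ext) (simp add: g_def decomp)
        have gd: "(g has_derivative (\<lambda>h. P0' h + (\<Sum>p\<in>I. cf p Gh * Q0' p h) + 0)) (at (Ctil Ch))"
          unfolding geq
          by (intro has_derivative_add has_derivative_sum has_derivative_mult_right has_derivative_const P0')
             (use Q0' in blast)
        have key: "2 * frechet_derivative (\<lambda>X. g (Ctil X)) (at Ch) Z = Sh \<bullet> Z"
          using key_identity[OF ChS Zs gd] unfolding Sh_def Siso_def g_def .
        have num: "g (Ctil C1) - g (Ctil C0) - ddot Sh Z = Rem (\<lambda>X. P X + (\<Sum>p\<in>I. cf p Gh * Q p X) + k0 Gh) Ch Z"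
          unfolding Rem_def decF[symmetric] ChZ ddot_inner key[symmetric] by simp
        have cfb: "\<forall>p\<in>I. \<bar>cf p Gh\<bar> \<le> Cb p"
        proof
          fix p assume p: "p \<in> I"
          have a: "fst p \<in> {1..m}" using p unfolding I_def by auto
          have mu0: "mu (fst p) > 0" using mu a by blast
          have G1: "norm (Gh (fst p)) \<le> MG (fst p)"
          proof -
            have "norm (Gh (fst p)) \<le> (1/2) * (norm (Gam (fst p) tn) + norm (Gam (fst p) (tn + dt)))"
              unfolding Gh_def by (simp add: norm_triangle_ineq)
            also have "\<dots> \<le> (1/2) * (MG (fst p) + MG (fst p))"
              using MG a t0 t1 by (intro mult_left_mono add_mono) auto
            finally show ?thesis by simp
          qed
          define Bm where "Bm = S0 (fst p) + mu (fst p) *\<^sub>R (Gh (fst p) - mat 1)"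
          have nB: "norm Bm \<le> norm (S0 (fst p)) + mu (fst p) * (MG (fst p) + norm (mat 1 :: tensor))"
          proof -
            have "norm Bm \<le> norm (S0 (fst p)) + norm (mu (fst p) *\<^sub>R (Gh (fst p) - mat 1))"
              unfolding Bm_def by (rule norm_triangle_ineq)
            also have "norm (mu (fst p) *\<^sub>R (Gh (fst p) - mat 1)) = mu (fst p) * norm (Gh (fst p) - mat 1)"
              using mu0 by simp
            also have "\<dots> \<le> mu (fst p) * (MG (fst p) + norm (mat 1 :: tensor))"
            proof (rule mult_left_mono)
              have "norm (Gh (fst p) - mat 1) \<le> norm (Gh (fst p)) + norm (mat 1 :: tensor)"
                by (rule norm_triangle_ineq4)
              then show "norm (Gh (fst p) - mat 1) \<le> MG (fst p) + norm (mat 1 :: tensor)" using G1 by linarith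
            qed (use mu0 in simp)
            finally show ?thesis by simp
          qed
          have e: "\<bar>cf p Gh\<bar> = (1 / (2 * mu (fst p))) * \<bar>Bm $ fst (snd p) $ snd (snd p)\<bar>"
            unfolding cf_def Bm_def using mu0 by (simp add: abs_mult)
          also have "\<dots> \<le> (1 / (2 * mu (fst p))) * norm Bm"
            using mu0 by (intro mult_left_mono entry_le_norm) simp
          also have "\<dots> \<le> Cb p"
            unfolding Cb_def using mu0 nB by (intro mult_left_mono) simp_all
          finally show "\<bar>cf p Gh\<bar> \<le> Cb p" .
        qed
        have remb: "\<bar>Rem (\<lambda>X. P X + (\<Sum>p\<in>I. cf p Gh * Q p X) + k0 Gh) Ch Z\<bar> \<le> B * norm Z ^ 3"
          using B[rule_format, of "\<lambda>p. cf p Gh" Ch Z "k0 Gh"] cfb CK01 ChZ by simp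
        have nZ: "norm Z \<le> L * dt"
        proof -
          have "norm (C (tn + dt) - C tn) \<le> L * \<bar>(tn + dt) - tn\<bar>" using L(2) t0 t1 by blast
          then have n1: "norm (C1 - C0) \<le> L * dt" using H unfolding C0_def C1_def by simp
          have "0 \<le> L * dt" using L(1) H by simp
          then show ?thesis using n1 unfolding Z_def by simp
        qed
        define nv where "nv = g (Ctil C1) - g (Ctil C0) - ddot Sh Z"
        have nz: "norm Z > 0" using False by simp
        have rv: "\<bar>nv\<bar> \<le> B * norm Z ^ 3" using remb num unfolding nv_def by simp
        have e1: "tnorm (Senh2 m mu S0 G Ginf C Gam tn dt) = \<bar>nv\<bar> / (norm Z)\<^sup>2 * norm Z"
          using Sen False unfolding nv_def by (simp add: tnorm_norm abs_divide)
        also have "\<dots> = \<bar>nv\<bar> / norm Z" using nz by (simp add: power2_eq_square)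
        also have "\<dots> \<le> B * norm Z ^ 3 / norm Z" using rv nz by (intro divide_right_mono) auto
        also have "\<dots> = B * (norm Z)\<^sup>2" using nz by (simp add: power3_eq_cube power2_eq_square)
        also have "\<dots> \<le> \<bar>B\<bar> * (L * dt)\<^sup>2"
        proof -
          have "B * (norm Z)\<^sup>2 \<le> \<bar>B\<bar> * (norm Z)\<^sup>2" by (intro mult_right_mono) auto
          also have "\<dots> \<le> \<bar>B\<bar> * (L * dt)\<^sup>2" using nZ by (intro mult_left_mono power_mono) auto
          finally show ?thesis .
        qed
        also have "\<dots> \<le> (\<bar>B\<bar> * L\<^sup>2 + 1) * dt\<^sup>2" by (simp add: power_mult_distrib algebra_simps)
        finally show ?thesis .
      qed
    qed
  qed
qed

end
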